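(* Let $g\in BF$ be an element with tree-braid-tree diagram $(\mathrm{T}_{+},\sigma,\mathrm{T}_{-})$, let $\ell_u(\mathrm{T}_+)\mapsto\ell_v(\mathrm{T}_-)$ be a branch of $g$, let $h$ be an element of $F<BF$, and let $h'=(h)_{[v]}$. Then $\mathcal{N}(gh')=\mathcal{N}(g)+\mathcal{N}(h)-1$.
   Context: The braided Thompson group $BV$ consists of equivalence classes of tree-braid-tree diagrams $(\mathrm{T}_+,\beta,\mathrm{T}_-)$: two rooted finite binary trees with the same number $m$ of leaves and a braid $\beta\in B_m$ joining leaves of $\mathrm{T}_+$ to those of $\mathrm{T}_-$, modulo adding/removing carets (splitting a strand into two parallel strands) and moving carets through crossings; multiplication is stacking and reducing. $BF\le BV$ is the subgroup of elements whose braid is a pure braid (each strand joins the $i$-th leaf of the source tree to the $i$-th leaf of the target tree); Thompson's group $F\le BF$ is the subgroup with trivial braid. $\mathcal{N}(g)$ is the number of leaves of each tree in the reduced diagram of $g$. Leaves are identified with binary words; a branch $\ell_u(\mathrm{T}_+)\mapsto\ell_v(\mathrm{T}_-)$ means leaf $u$ of the source tree is joined by a strand to leaf $v$ of the target tree. For $h\in F$ with tree pair $(\mathrm{H}_+,\mathrm{id},\mathrm{H}_-)$, $(h)_{[v]}\in F$ is obtained from a tree pair $(\mathrm{T},\mathrm{id},\mathrm{T})$ having $v$ as a leaf by attaching $\mathrm{H}_+$ at leaf $v$ of the source tree and $\mathrm{H}_-$ at leaf $v$ of the target tree. *)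

theory Defs
  imports Main
begin

datatype tree = Leaf | Node tree tree

text \<open>Leaves in left-to-right order, each identified with its binary address
  (False = 0 = left child, True = 1 = right child).\<close>
fun leaves :: "tree \<Rightarrow> bool list list" where
  "leaves Leaf = [[]]"
| "leaves (Node l r) = map (Cons False) (leaves l) @ map (Cons True) (leaves r)"

definition num_leaves :: "tree \<Rightarrow> nat" where
  "num_leaves t = length (leaves t)"

fun graft :: "tree \<Rightarrow> bool list \<Rightarrow> tree \<Rightarrow> tree" where
  "graft Leaf [] s = s"
| "graft (Node l r) (False # u) s = Node (graft l u s) r"
| "graft (Node l r) (True # u) s = Node l (graft r u s)"
| "graft t _ s = t"

definition expand :: "tree \<Rightarrow> nat \<Rightarrow> tree" where
  "expand t i = graft t (leaves t ! i) (Node Leaf Leaf)"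

text \<open>A braid word is a list of Artin generators: (a, True) is sigma_a, (a, False)
  is its inverse; sigma_a crosses the strands at positions a and a+1 (0-indexed).
  Words are read from the source tree (top) to the target tree (bottom).\<close>
type_synonym bword = "(nat \<times> bool) list"

definition swp :: "nat \<Rightarrow> nat \<Rightarrow> nat" where
  "swp a p = (if p = a then a + 1 else if p = a + 1 then a else p)"

text \<open>Final position of the strand starting at position p.\<close>
fun bpos :: "bword \<Rightarrow> nat \<Rightarrow> nat" where
  "bpos [] p = p"
| "bpos ((a, s) # w) p = bpos w (swp a p)"

inductive braid_step :: "bword \<Rightarrow> bword \<Rightarrow> bool" where
  cancel: "braid_step (xs @ [(a, s), (a, \<not> s)] @ ys) (xs @ ys)"
| comm: "a + 1 < b \<or> b + 1 < a \<Longrightarrow>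
     braid_step (xs @ [(a, s), (b, t)] @ ys) (xs @ [(b, t), (a, s)] @ ys)"
| braid: "braid_step (xs @ [(a, True), (a + 1, True), (a, True)] @ ys)
                     (xs @ [(a + 1, True), (a, True), (a + 1, True)] @ ys)"

text \<open>Cabling: the strand that starts at position p is doubled into two parallel
  strands.\<close>
fun cable :: "nat \<Rightarrow> bword \<Rightarrow> bword" where
  "cable p [] = []"
| "cable p ((a, s) # w) =
     (if a + 1 < p then [(a, s)]
      else if a + 1 = p then [(a, s), (a + 1, s)]
      else if a = p then [(p + 1, s), (p, s)]
      else [(a + 1, s)]) @ cable (swp a p) w"

type_synonym diag = "tree \<times> bword \<times> tree"

definition wf_diag :: "diag \<Rightarrow> bool" where
  "wf_diag D = (case D of (Tp, w, Tm) \<Rightarrow>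
     num_leaves Tp = num_leaves Tm \<and> (\<forall>(a, s) \<in> set w. a + 1 < num_leaves Tp))"

definition dleaves :: "diag \<Rightarrow> nat" where
  "dleaves D = num_leaves (fst D)"

text \<open>Elementary moves: replacing the braid by an equal braid, and adding a caret
  (splitting the strand starting at source leaf i into two parallel strands;
  this also realises moving carets through crossings).\<close>
inductive dstep :: "diag \<Rightarrow> diag \<Rightarrow> bool" where
  braid_move: "wf_diag (Tp, w, Tm) \<Longrightarrow> wf_diag (Tp, w', Tm) \<Longrightarrow> braid_step w w' \<Longrightarrow>
     dstep (Tp, w, Tm) (Tp, w', Tm)"
| caret_move: "wf_diag (Tp, w, Tm) \<Longrightarrow> i < num_leaves Tp \<Longrightarrow>
     dstep (Tp, w, Tm) (expand Tp i, cable i w, expand Tm (bpos w i))"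

definition diag_equiv :: "diag \<Rightarrow> diag \<Rightarrow> bool" where
  "diag_equiv = equivclp dstep"

text \<open>The element of BV represented by a diagram (its equivalence class).\<close>
definition elt :: "diag \<Rightarrow> diag set" where
  "elt D = {D'. diag_equiv D D'}"

text \<open>Multiplication: stack (g on top, target tree of g glued to source tree of h)
  and take the class of the result.\<close>
definition mult :: "diag set \<Rightarrow> diag set \<Rightarrow> diag set" where
  "mult X Y = {D. \<exists>Tp w Tm w' Sm. (Tp, w, Tm) \<in> X \<and> (Tm, w', Sm) \<in> Y \<and>
                    diag_equiv (Tp, w @ w', Sm) D}"

text \<open>N(g): number of leaves of the reduced diagram, i.e. the minimal number of
  leaves of a diagram representing g.\<close>
definition NN :: "diag set \<Rightarrow> nat" where
  "NN X = (LEAST n. \<exists>D \<in> X. dleaves D = n)"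

definition reduced :: "diag \<Rightarrow> bool" where
  "reduced D = (wf_diag D \<and> dleaves D = NN (elt D))"

text \<open>Membership in BF (pure braid) and F (trivial braid).\<close>
definition in_BF :: "diag \<Rightarrow> bool" where
  "in_BF D = (case D of (Tp, w, Tm) \<Rightarrow> wf_diag D \<and> (\<forall>i < num_leaves Tp. bpos w i = i))"

definition in_F :: "diag \<Rightarrow> bool" where
  "in_F D = (case D of (Tp, w, Tm) \<Rightarrow> wf_diag D \<and> w = [])"

text \<open>(h)_[v] computed from a tree T having v as a leaf and a tree pair (Hp, id, Hm) of h.\<close>
definition sub_at :: "tree \<Rightarrow> bool list \<Rightarrow> tree \<Rightarrow> tree \<Rightarrow> diag" where
  "sub_at T v Hp Hm = (graft T v Hp, [], graft T v Hm)"

end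

theory Submission
  imports Defs
begin

definition bnd :: "nat \<Rightarrow> bword \<Rightarrow> bool" where
  "bnd n w = (\<forall>(a,s)\<in>set w. a+1<n)"

definition bstep :: "nat \<Rightarrow> bword \<Rightarrow> bword \<Rightarrow> bool" where
  "bstep n x y = (braid_step x y \<and> bnd n x \<and> bnd n y)"

definition beq :: "nat \<Rightarrow> bword \<Rightarrow> bword \<Rightarrow> bool" where
  "beq n = equivclp (bstep n)"

definition cpos :: "nat \<Rightarrow> nat \<Rightarrow> nat" where
  "cpos p q = (if q < p then q else Suc q)"

definition dpos :: "nat \<Rightarrow> nat \<Rightarrow> nat" where
  "dpos q p = (if p < q then p else p - 1)"

fun del :: "nat \<Rightarrow> bword \<Rightarrow> bword" where
  "del q [] = []"
| "del q ((a, s) # w) =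
     (if a + 1 < q then [(a, s)]
      else if a = q \<or> a + 1 = q then []
      else [(a - 1, s)]) @ del (swp a q) w"

lemma bnd_simps[simp]: "bnd n [] = True" "bnd n ((a,s)#w) = (a+1<n \<and> bnd n w)"
  "bnd n (xs @ ys) = (bnd n xs \<and> bnd n ys)"
  by (auto simp: bnd_def)

lemma bpos_append[simp]: "bpos (xs @ ys) p = bpos ys (bpos xs p)"
  by (induction xs arbitrary: p) auto

lemma cable_append[simp]: "cable p (xs @ ys) = cable p xs @ cable (bpos xs p) ys"
  by (induction xs arbitrary: p) auto

lemma del_append[simp]: "del p (xs @ ys) = del p xs @ del (bpos xs p) ys"
  by (induction xs arbitrary: p) auto

lemma swp_swp[simp]: "swp a (swp a p) = p" by (simp add: swp_def)

lemma swp_lt: "p < n \<Longrightarrow> a + 1 < n \<Longrightarrow> swp a p < n" by (simp add: swp_def)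

lemma swp_inj: "swp a p = swp a q \<longleftrightarrow> p = q" by (metis swp_swp)

lemma bpos_lt: "bnd n w \<Longrightarrow> p < n \<Longrightarrow> bpos w p < n"
  by (induction w arbitrary: p) (auto simp: swp_lt)

lemma bpos_inj: "bpos w p = bpos w q \<longleftrightarrow> p = q"
  by (induction w arbitrary: p q) (auto simp: swp_inj)

lemma bnd_mono: "bnd n w \<Longrightarrow> n \<le> m \<Longrightarrow> bnd m w"
  by (auto simp: bnd_def)

lemma bnd_cable: "bnd n w \<Longrightarrow> p < n \<Longrightarrow> bnd (Suc n) (cable p w)"
  by (induction w arbitrary: p) (auto simp: swp_lt)

lemma bnd_del: "bnd (Suc n) w \<Longrightarrow> q \<le> n \<Longrightarrow> bnd n (del q w)"
proof (induction w arbitrary: q)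
  case (Cons x w) then show ?case by (cases x) (auto simp: swp_def)
qed simp

definition cblk :: "nat \<Rightarrow> nat \<Rightarrow> bool \<Rightarrow> bword" where
  "cblk p a s = (if a + 1 < p then [(a, s)]
      else if a + 1 = p then [(a, s), (a + 1, s)]
      else if a = p then [(p + 1, s), (p, s)]
      else [(a + 1, s)])"

definition dblk :: "nat \<Rightarrow> nat \<Rightarrow> bool \<Rightarrow> bword" where
  "dblk q a s = (if a + 1 < q then [(a, s)]
      else if a = q \<or> a + 1 = q then []
      else [(a - 1, s)])"

lemma cable_Cons: "cable p ((a,s)#w) = cblk p a s @ cable (swp a p) w"
  by (simp add: cblk_def)
lemma del_Cons: "del p ((a,s)#w) = dblk p a s @ del (swp a p) w"
  by (simp add: dblk_def)

declare cable.simps(2)[simp del] del.simps(2)[simp del]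

lemma cable_single: "cable p [(a,s)] = cblk p a s" by (simp add: cable_Cons)
lemma del_single: "del p [(a,s)] = dblk p a s" by (simp add: del_Cons)

lemma bpos_cblk_same: "bpos (cblk p a s) p = swp a p" by (simp add: cblk_def swp_def)
lemma bpos_cblk_Suc: "bpos (cblk p a s) (Suc p) = Suc (swp a p)" by (simp add: cblk_def swp_def)

lemma bpos_cblk_other: "q \<noteq> p \<Longrightarrow> bpos (cblk p a s) (cpos p q) = cpos (swp a p) (swp a q)"
  by (simp add: cblk_def swp_def cpos_def)

lemma bpos_dblk_other: "q \<noteq> p \<Longrightarrow> bpos (dblk q a s) (dpos q p) = dpos (swp a q) (swp a p)"
  apply (cases "a + 1 < q")
   apply (auto simp: dblk_def swp_def dpos_def)[1]
  apply (cases "a = q")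
   apply (auto simp: dblk_def swp_def dpos_def)[1]
  apply (cases "a + 1 = q")
   apply (auto simp: dblk_def swp_def dpos_def)[1]
  apply (auto simp: dblk_def swp_def dpos_def)
  done

lemma del_cblk_Suc: "del (Suc p) (cblk p a s) = [(a,s)]"
  by (auto simp: cblk_def del_Cons dblk_def swp_def)
lemma del_cblk_same: "del p (cblk p a s) = [(a,s)]"
  by (auto simp: cblk_def del_Cons dblk_def swp_def)

lemma del_cblk_comm: "q \<noteq> p \<Longrightarrow> del (cpos p q) (cblk p a s) = cable (dpos q p) (dblk q a s)"
proof -
  assume "q \<noteq> p"
  have "p < a \<or> p = a \<or> p = a+1 \<or> a+1 < p" "q < a \<or> q = a \<or> q = a+1 \<or> a+1 < q" by linarith+
  then show ?thesis using \<open>q \<noteq> p\<close>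
    by (elim disjE) (auto simp: cblk_def del_Cons dblk_def swp_def cable_Cons cpos_def dpos_def)
qed

lemma bpos_cable_same: "bpos (cable p w) p = bpos w p"
proof (induction w arbitrary: p)
  case (Cons x w) obtain a s where x: "x = (a,s)" by (cases x)
  show ?case by (simp add: x cable_Cons Cons.IH bpos_cblk_same)
qed simp

lemma bpos_cable_Suc: "bpos (cable p w) (Suc p) = Suc (bpos w p)"
proof (induction w arbitrary: p)
  case (Cons x w) obtain a s where x: "x = (a,s)" by (cases x)
  show ?case by (simp add: x cable_Cons Cons.IH bpos_cblk_Suc)
qed simp

lemma bpos_cable_other: "q \<noteq> p \<Longrightarrow> bpos (cable p w) (cpos p q) = cpos (bpos w p) (bpos w q)"
proof (induction w arbitrary: p q)
  case (Cons x w) obtain a s where x: "x = (a,s)" by (cases x)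
  have "swp a q \<noteq> swp a p" using Cons.prems by (simp add: swp_inj)
  then show ?case using Cons.prems by (simp add: x cable_Cons Cons.IH bpos_cblk_other)
qed (simp)

lemma bpos_del_other: "q \<noteq> p \<Longrightarrow> bpos (del q w) (dpos q p) = dpos (bpos w q) (bpos w p)"
proof (induction w arbitrary: p q)
  case (Cons x w) obtain a s where x: "x = (a,s)" by (cases x)
  have "swp a q \<noteq> swp a p" using Cons.prems by (simp add: swp_inj)
  then show ?case using Cons.prems by (simp add: x del_Cons Cons.IH bpos_dblk_other)
qed (simp)

lemma del_cable_Suc: "del (Suc p) (cable p w) = w"
proof (induction w arbitrary: p)
  case (Cons x w) obtain a s where x: "x = (a,s)" by (cases x)
  show ?case by (simp add: x cable_Cons Cons.IH del_cblk_Suc bpos_cblk_Suc del_Cons dblk_def)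
qed simp

lemma del_cable_same: "del p (cable p w) = w"
proof (induction w arbitrary: p)
  case (Cons x w) obtain a s where x: "x = (a,s)" by (cases x)
  show ?case by (simp add: x cable_Cons Cons.IH del_cblk_same bpos_cblk_same del_Cons dblk_def)
qed simp

lemma del_cable_comm: "q \<noteq> p \<Longrightarrow> del (cpos p q) (cable p w) = cable (dpos q p) (del q w)"
proof (induction w arbitrary: p q)
  case (Cons x w) obtain a s where x: "x = (a,s)" by (cases x)
  have "swp a q \<noteq> swp a p" using Cons.prems by (simp add: swp_inj)
  then show ?case using Cons.prems
    by (simp add: x cable_Cons Cons.IH del_Cons del_cblk_comm bpos_cblk_other bpos_dblk_other)
qed simp

lemma beq_refl[simp]: "beq n x x" by (simp add: beq_def)
lemma beq_sym: "beq n x y \<Longrightarrow> beq n y x" by (simp add: beq_def equivclp_sym)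
lemma beq_trans: "beq n x y \<Longrightarrow> beq n y z \<Longrightarrow> beq n x z"
  unfolding beq_def by (rule equivclp_trans)
lemma bstep_beq: "bstep n x y \<Longrightarrow> beq n x y" unfolding beq_def by (rule r_into_equivclp)

lemma beq_bnd: "beq n x y \<Longrightarrow> bnd n x \<Longrightarrow> bnd n y"
  unfolding beq_def
proof (induction rule: equivclp_induct)
  case base then show ?case .
next
  case (step y z) then show ?case by (auto simp: bstep_def)
qed

lemma beq_induct_gen:
  assumes "beq n x y" and "\<And>x y. bstep n x y \<Longrightarrow> R (f x) (f y)"
    and "equivp R"
  shows "R (f x) (f y)"
  using assms(1) unfolding beq_def
proof (induction rule: equivclp_induct)
  case base then show ?case using assms(3) by (simp add: equivp_reflp)
next
  case (step y z)
  then show ?case using assms(2,3)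
    by (meson equivp_symp equivp_transp)
qed

lemma equivp_beq: "equivp (beq n)"
  unfolding beq_def by (simp add: equivp_evquivclp)

lemma braid_step_ctx: "braid_step x y \<Longrightarrow> braid_step (us @ x @ vs) (us @ y @ vs)"
proof (induction rule: braid_step.induct)
  case (cancel xs a s ys)
  then show ?case using braid_step.cancel[of "us @ xs" a s "ys @ vs"] by simp
next
  case (comm a b xs s t ys)
  then show ?case using braid_step.comm[of a b "us @ xs" s t "ys @ vs"] by simp
next
  case (braid xs a ys)
  then show ?case using braid_step.braid[of "us @ xs" a "ys @ vs"] by simp
qed

lemma beq_ctx: "beq n x y \<Longrightarrow> bnd n us \<Longrightarrow> bnd n vs \<Longrightarrow> beq n (us @ x @ vs) (us @ y @ vs)"
  apply (rule beq_induct_gen[where f="\<lambda>x. us @ x @ vs", OF _ _ equivp_beq])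
   apply assumption
  apply (rule bstep_beq)
  apply (auto simp: bstep_def braid_step_ctx)
  done

lemma beq_app: "beq n x x' \<Longrightarrow> beq n y y' \<Longrightarrow> bnd n x \<Longrightarrow> bnd n y \<Longrightarrow> beq n (x @ y) (x' @ y')"
proof -
  assume a: "beq n x x'" "beq n y y'" "bnd n x" "bnd n y"
  have "beq n ([] @ x @ y) ([] @ x' @ y)" using a by (intro beq_ctx) auto
  moreover have "beq n (x' @ y @ []) (x' @ y' @ [])" using a beq_bnd by (intro beq_ctx) auto
  ultimately show ?thesis by (auto intro: beq_trans)
qed

lemma bs_cancel: "x = xs @ [(a,s),(a,\<not>s)] @ ys \<Longrightarrow> y = xs @ ys \<Longrightarrow> bnd n x \<Longrightarrow> beq n x y"
  using braid_step.cancel[of xs a s ys] by (intro bstep_beq) (auto simp: bstep_def)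
lemma bs_comm: "x = xs @ [(a,s),(b,t)] @ ys \<Longrightarrow> y = xs @ [(b,t),(a,s)] @ ys \<Longrightarrow>
   a + 1 < b \<or> b + 1 < a \<Longrightarrow> bnd n x \<Longrightarrow> beq n x y"
  using braid_step.comm[of a b xs s t ys] by (intro bstep_beq) (auto simp: bstep_def)
lemma bs_braid: "x = xs @ [(a,True),(a+1,True),(a,True)] @ ys \<Longrightarrow>
   y = xs @ [(a+1,True),(a,True),(a+1,True)] @ ys \<Longrightarrow> bnd n x \<Longrightarrow> beq n x y"
  using braid_step.braid[of xs a ys] by (intro bstep_beq) (auto simp: bstep_def)

lemma swp_comm: "a + 1 < b \<or> b + 1 < a \<Longrightarrow> swp b (swp a p) = swp a (swp b p)"
  by (auto simp: swp_def)

lemma braid_step_bpos: "braid_step x y \<Longrightarrow> bpos x = bpos y"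
proof (induction rule: braid_step.induct)
  case (cancel xs a s ys) then show ?case by (auto simp: fun_eq_iff)
next
  case (comm a b xs s t ys) then show ?case by (auto simp: fun_eq_iff swp_comm)
next
  case (braid xs a ys) then show ?case by (auto simp: fun_eq_iff swp_def)
qed

lemma beq_bpos: "beq n x y \<Longrightarrow> bpos x = bpos y"
  by (rule beq_induct_gen[where R="(=)" and f=bpos])
     (auto simp: bstep_def braid_step_bpos equivp_def)

definition far :: "nat \<Rightarrow> nat \<Rightarrow> bool" where "far a b = (a + 1 < b \<or> b + 1 < a)"

lemma far_swap1: "\<forall>(a,s)\<in>set xs. far a b \<Longrightarrow> bnd n (us @ xs @ [(b,t)] @ vs) \<Longrightarrow>
   beq n (us @ xs @ [(b,t)] @ vs) (us @ [(b,t)] @ xs @ vs)"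
proof (induction xs arbitrary: us)
  case Nil then show ?case by simp
next
  case (Cons x xs)
  obtain a s where x: "x = (a,s)" by (cases x)
  have "beq n ((us @ [x]) @ xs @ [(b,t)] @ vs) ((us @ [x]) @ [(b,t)] @ xs @ vs)"
    using Cons by (intro Cons.IH) auto
  moreover have "beq n ((us @ [x]) @ [(b,t)] @ xs @ vs) (us @ [(b,t)] @ (x # xs) @ vs)"
    using Cons.prems by (intro bs_comm[where xs=us and ys="xs @ vs" and a=a and s=s and b=b and t=t])
       (auto simp: x far_def)
  ultimately show ?case by (auto intro: beq_trans)
qed

lemma far_swap: "\<forall>(a,s)\<in>set xs. \<forall>(b,t)\<in>set ys. far a b \<Longrightarrow> bnd n (us @ xs @ ys @ vs) \<Longrightarrow>
   beq n (us @ xs @ ys @ vs) (us @ ys @ xs @ vs)"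
proof (induction ys arbitrary: us)
  case Nil then show ?case by simp
next
  case (Cons y ys)
  obtain b t where y: "y = (b,t)" by (cases y)
  have "beq n (us @ xs @ [(b,t)] @ (ys @ vs)) (us @ [(b,t)] @ xs @ (ys @ vs))"
    using Cons.prems by (intro far_swap1) (auto simp: y)
  moreover have "beq n ((us @ [(b,t)]) @ xs @ ys @ vs) ((us @ [(b,t)]) @ ys @ xs @ vs)"
    using Cons.prems by (intro Cons.IH) (auto simp: y)
  ultimately show ?case by (auto simp: y intro: beq_trans)
qed

lemma cblk_swp_far: "far a b \<Longrightarrow> cblk (swp b p) a s = cblk p a s"
  by (auto simp: cblk_def swp_def far_def)

lemma cblk_far: "far a b \<Longrightarrow> \<forall>(c,s')\<in>set (cblk p a s). \<forall>(d,t')\<in>set (cblk (swp a p) b t). far c d"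
proof -
  assume "far a b"
  have "p < a \<or> p = a \<or> p = a+1 \<or> a+1 < p" "p < b \<or> p = b \<or> p = b+1 \<or> b+1 < p" by linarith+
  then show ?thesis using \<open>far a b\<close>
    by (elim disjE) (auto simp: cblk_def swp_def far_def)
qed

lemma bnd_cblk: "a + 1 < n \<Longrightarrow> p < n \<Longrightarrow> bnd (Suc n) (cblk p a s)"
  by (auto simp: cblk_def)

lemma loc_comm: "far a b \<Longrightarrow> a+1<n \<Longrightarrow> b+1<n \<Longrightarrow> p<n \<Longrightarrow>
  beq (Suc n) (cable p [(a,s),(b,t)]) (cable p [(b,t),(a,s)])"
proof -
  assume f: "far a b" and b: "a+1<n" "b+1<n" "p<n"
  have fb: "far b a" using f by (auto simp: far_def)
  have e1: "cable p [(a,s),(b,t)] = [] @ cblk p a s @ cblk (swp a p) b t @ []"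
    by (simp add: cable_Cons)
  have e2: "cable p [(b,t),(a,s)] = [] @ cblk (swp a p) b t @ cblk p a s @ []"
    using cblk_swp_far[OF f, of p s] cblk_swp_far[OF fb, of p t] by (simp add: cable_Cons)
  show ?thesis unfolding e1 e2
    by (rule far_swap) (use cblk_far[OF f] b in \<open>auto simp: bnd_cblk swp_lt\<close>)
qed

lemma loc_cancel: "a+1<n \<Longrightarrow> p<n \<Longrightarrow> beq (Suc n) (cable p [(a,s),(a,\<not>s)]) []"
proof -
  assume b: "a+1<n" "p<n"
  consider "p = a" | "p = a + 1" | "p \<noteq> a \<and> p \<noteq> a+1" by auto
  then show ?thesis
  proof cases
    case 1
    then have e: "cable p [(a,s),(a,\<not>s)] = [(a+1,s)] @ [(a,s),(a,\<not>s)] @ [(a+1,\<not>s)]"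
      by (simp add: cable_Cons cblk_def swp_def)
    have "beq (Suc n) ([(a+1,s)] @ [(a,s),(a,\<not>s)] @ [(a+1,\<not>s)]) ([] @ [(a+1,s),(a+1,\<not>s)] @ [])"
      using b by (intro bs_cancel[where xs="[(a+1,s)]" and ys="[(a+1,\<not>s)]" and a=a and s=s]) auto
    moreover have "beq (Suc n) ([] @ [(a+1,s),(a+1,\<not>s)] @ []) []"
      using b by (intro bs_cancel[where xs="[]" and ys="[]" and a="a+1" and s=s]) auto
    ultimately show ?thesis unfolding e by (auto intro: beq_trans)
  next
    case 2
    then have e: "cable p [(a,s),(a,\<not>s)] = [(a,s)] @ [(a+1,s),(a+1,\<not>s)] @ [(a,\<not>s)]"
      by (simp add: cable_Cons cblk_def swp_def)
    have "beq (Suc n) ([(a,s)] @ [(a+1,s),(a+1,\<not>s)] @ [(a,\<not>s)]) ([] @ [(a,s),(a,\<not>s)] @ [])"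
      using b by (intro bs_cancel[where xs="[(a,s)]" and ys="[(a,\<not>s)]" and a="a+1" and s=s]) auto
    moreover have "beq (Suc n) ([] @ [(a,s),(a,\<not>s)] @ []) []"
      using b by (intro bs_cancel[where xs="[]" and ys="[]" and a=a and s=s]) auto
    ultimately show ?thesis unfolding e by (auto intro: beq_trans)
  next
    case 3
    then obtain c where e: "cable p [(a,s),(a,\<not>s)] = [] @ [(c,s),(c,\<not>s)] @ []" and "c + 1 < Suc n"
      using b by (cases "a + 1 < p") (auto simp: cable_Cons cblk_def swp_def)
    then show ?thesis unfolding e by (intro bs_cancel[where xs="[]" and ys="[]" and a=c and s=s]) auto
  qed
qed

lemma loc_braid: "a+2<n \<Longrightarrow> p<n \<Longrightarrow>
   beq (Suc n) (cable p [(a,True),(a+1,True),(a,True)]) (cable p [(a+1,True),(a,True),(a+1,True)])"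
proof -
  assume b: "a+2<n" "p<n"
  define x where "x = (a,True)"
  define y where "y = (a+1,True)"
  define z where "z = (a+2,True)"
  consider "p = a" | "p = a + 1" | "p = a + 2" | "p < a" | "a + 2 < p" by linarith
  then show ?thesis
  proof cases
    case 1
    then have eL: "cable p [(a,True),(a+1,True),(a,True)] = [y,x,z,y,x]"
      and eR: "cable p [(a+1,True),(a,True),(a+1,True)] = [z,y,x,z,y]"
      by (simp_all add: cable_Cons cblk_def swp_def x_def y_def z_def)
    have s1: "beq (Suc n) [y,x,z,y,x] [y,z,x,y,x]"
      using b by (intro bs_comm[where xs="[y]" and ys="[y,x]" and a=a and b="a+2"]) (auto simp: x_def y_def z_def)
    have s2: "beq (Suc n) [y,z,x,y,x] [y,z,y,x,y]"
      using b by (intro bs_braid[where xs="[y,z]" and ys="[]" and a=a]) (auto simp: x_def y_def z_def)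
    have s3: "beq (Suc n) [y,z,y,x,y] [z,y,z,x,y]"
      using b by (intro bs_braid[where xs="[]" and ys="[x,y]" and a="a+1"]) (auto simp: x_def y_def z_def)
    have s4: "beq (Suc n) [z,y,z,x,y] [z,y,x,z,y]"
      using b by (intro bs_comm[where xs="[z,y]" and ys="[y]" and a="a+2" and b=a]) (auto simp: x_def y_def z_def)
    show ?thesis unfolding eL eR using s1 s2 s3 s4 by (meson beq_trans)
  next
    case 2
    then have eL: "cable p [(a,True),(a+1,True),(a,True)] = [x,y,z,y,x]"
      and eR: "cable p [(a+1,True),(a,True),(a+1,True)] = [z,y,x,y,z]"
      by (simp_all add: cable_Cons cblk_def swp_def x_def y_def z_def)
    have s1: "beq (Suc n) [x,y,z,y,x] [x,z,y,z,x]"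
      using b by (intro bs_braid[where xs="[x]" and ys="[x]" and a="a+1"]) (auto simp: x_def y_def z_def)
    have s2: "beq (Suc n) [x,z,y,z,x] [z,x,y,z,x]"
      using b by (intro bs_comm[where xs="[]" and ys="[y,z,x]" and a=a and b="a+2"]) (auto simp: x_def y_def z_def)
    have s3: "beq (Suc n) [z,x,y,z,x] [z,x,y,x,z]"
      using b by (intro bs_comm[where xs="[z,x,y]" and ys="[]" and a="a+2" and b=a]) (auto simp: x_def y_def z_def)
    have s4: "beq (Suc n) [z,x,y,x,z] [z,y,x,y,z]"
      using b by (intro bs_braid[where xs="[z]" and ys="[z]" and a=a]) (auto simp: x_def y_def z_def)
    show ?thesis unfolding eL eR using s1 s2 s3 s4 by (meson beq_trans)
  next
    case 3
    then have eL: "cable p [(a,True),(a+1,True),(a,True)] = [x,y,z,x,y]"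
      and eR: "cable p [(a+1,True),(a,True),(a+1,True)] = [y,z,x,y,z]"
      by (simp_all add: cable_Cons cblk_def swp_def x_def y_def z_def)
    have s1: "beq (Suc n) [x,y,z,x,y] [x,y,x,z,y]"
      using b by (intro bs_comm[where xs="[x,y]" and ys="[y]" and a="a+2" and b=a]) (auto simp: x_def y_def z_def)
    have s2: "beq (Suc n) [x,y,x,z,y] [y,x,y,z,y]"
      using b by (intro bs_braid[where xs="[]" and ys="[z,y]" and a=a]) (auto simp: x_def y_def z_def)
    have s3: "beq (Suc n) [y,x,y,z,y] [y,x,z,y,z]"
      using b by (intro bs_braid[where xs="[y,x]" and ys="[]" and a="a+1"]) (auto simp: x_def y_def z_def)
    have s4: "beq (Suc n) [y,x,z,y,z] [y,z,x,y,z]"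
      using b by (intro bs_comm[where xs="[y]" and ys="[y,z]" and a=a and b="a+2"]) (auto simp: x_def y_def z_def)
    show ?thesis unfolding eL eR using s1 s2 s3 s4 by (meson beq_trans)
  next
    case 4
    then have eL: "cable p [(a,True),(a+1,True),(a,True)] = [] @ [(a+1,True),(a+2,True),(a+1,True)] @ []"
      and eR: "cable p [(a+1,True),(a,True),(a+1,True)] = [] @ [(a+2,True),(a+1,True),(a+2,True)] @ []"
      by (simp_all add: cable_Cons cblk_def swp_def)
    show ?thesis unfolding eL eR using b by (intro bs_braid[where xs="[]" and ys="[]" and a="a+1"]) auto
  next
    case 5
    then have eL: "cable p [(a,True),(a+1,True),(a,True)] = [] @ [(a,True),(a+1,True),(a,True)] @ []"
      and eR: "cable p [(a+1,True),(a,True),(a+1,True)] = [] @ [(a+1,True),(a,True),(a+1,True)] @ []"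
      by (simp_all add: cable_Cons cblk_def swp_def)
    show ?thesis unfolding eL eR using b by (intro bs_braid[where xs="[]" and ys="[]" and a="a"]) auto
  qed
qed

lemma bnd_cable_pos: "bnd n xs \<Longrightarrow> p < n \<Longrightarrow> bpos xs p < n" by (rule bpos_lt)

lemma cable_bstep: "bstep n x y \<Longrightarrow> p < n \<Longrightarrow> beq (Suc n) (cable p x) (cable p y)"
  unfolding bstep_def
proof (elim conjE)
  assume st: "braid_step x y" and bx: "bnd n x" and "bnd n y" and p: "p < n"
  from st show ?thesis
  proof cases
    case (cancel xs a s ys)
    let ?p = "bpos xs p"
    have pp: "?p < n" using bx p cancel by (auto intro: bpos_lt)
    have "beq (Suc n) (cable p xs @ cable ?p [(a,s),(a,\<not>s)] @ cable ?p ys) (cable p xs @ [] @ cable ?p ys)"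
      using bx cancel pp p by (intro beq_ctx loc_cancel) (auto intro: bnd_cable bpos_lt)
    then show ?thesis using cancel by (simp add: cable_Cons)
  next
    case (comm a b xs s t ys)
    let ?p = "bpos xs p"
    have pp: "?p < n" using bx p comm by (auto intro: bpos_lt)
    have e: "swp b (swp a ?p) = swp a (swp b ?p)" using comm by (simp add: swp_comm)
    have "beq (Suc n) (cable p xs @ cable ?p [(a,s),(b,t)] @ cable (swp b (swp a ?p)) ys)
        (cable p xs @ cable ?p [(b,t),(a,s)] @ cable (swp b (swp a ?p)) ys)"
      using bx comm pp p by (intro beq_ctx loc_comm) (auto intro!: bnd_cable bpos_lt swp_lt simp: far_def)
    then show ?thesis using comm e by (simp add: cable_Cons)
  next
    case (braid xs a ys)
    let ?p = "bpos xs p"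
    have pp: "?p < n" using bx p braid by (auto intro: bpos_lt)
    have e: "swp a (swp (a+1) (swp a ?p)) = swp (a+1) (swp a (swp (a+1) ?p))" by (simp add: swp_def)
    have "beq (Suc n) (cable p xs @ cable ?p [(a,True),(a+1,True),(a,True)] @ cable (swp a (swp (a+1) (swp a ?p))) ys)
        (cable p xs @ cable ?p [(a+1,True),(a,True),(a+1,True)] @ cable (swp a (swp (a+1) (swp a ?p))) ys)"
      using bx braid pp p by (intro beq_ctx loc_braid) (auto intro!: bnd_cable bpos_lt swp_lt)
    then show ?thesis using braid e by (simp add: cable_Cons)
  qed
qed

lemma cable_beq: "beq n x y \<Longrightarrow> p < n \<Longrightarrow> beq (Suc n) (cable p x) (cable p y)"
  by (rule beq_induct_gen[where f="cable p", OF _ _ equivp_beq]) (auto intro: cable_bstep)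

lemma dblk_swp_far: "far a b \<Longrightarrow> dblk (swp b q) a s = dblk q a s"
  by (auto simp: dblk_def swp_def far_def)

lemma dblk_far: "far a b \<Longrightarrow> \<forall>(c,s')\<in>set (dblk q a s). \<forall>(d,t')\<in>set (dblk (swp a q) b t). far c d"
proof -
  assume "far a b"
  have "q < a \<or> q = a \<or> q = a+1 \<or> a+1 < q" "q < b \<or> q = b \<or> q = b+1 \<or> b+1 < q" by linarith+
  then show ?thesis using \<open>far a b\<close>
    by (elim disjE) (auto simp: dblk_def swp_def far_def)
qed

lemma bnd_dblk: "a + 1 < Suc n \<Longrightarrow> q \<le> n \<Longrightarrow> bnd n (dblk q a s)"
  by (auto simp: dblk_def)

lemma loc_del_comm: "far a b \<Longrightarrow> a+1<Suc n \<Longrightarrow> b+1<Suc n \<Longrightarrow> q\<le>n \<Longrightarrow>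
  beq n (del q [(a,s),(b,t)]) (del q [(b,t),(a,s)])"
proof -
  assume f: "far a b" and b: "a+1<Suc n" "b+1<Suc n" "q\<le>n"
  have fb: "far b a" using f by (auto simp: far_def)
  have e1: "del q [(a,s),(b,t)] = [] @ dblk q a s @ dblk (swp a q) b t @ []"
    by (simp add: del_Cons)
  have e2: "del q [(b,t),(a,s)] = [] @ dblk (swp a q) b t @ dblk q a s @ []"
    using dblk_swp_far[OF f, of q s] dblk_swp_far[OF fb, of q t] by (simp add: del_Cons)
  have sq: "swp a q \<le> n" using b by (auto simp: swp_def)
  show ?thesis unfolding e1 e2
    by (rule far_swap) (use dblk_far[OF f] b sq in \<open>auto simp: bnd_dblk\<close>)
qed

lemma loc_del_cancel: "a+1<Suc n \<Longrightarrow> q\<le>n \<Longrightarrow> beq n (del q [(a,s),(a,\<not>s)]) []"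
proof -
  assume b: "a+1<Suc n" "q\<le>n"
  consider "a + 1 < q" | "a = q \<or> a + 1 = q" | "\<not> a + 1 < q \<and> \<not> (a = q \<or> a + 1 = q)" by auto
  then show ?thesis
  proof cases
    case 1
    then have e: "del q [(a,s),(a,\<not>s)] = [] @ [(a,s),(a,\<not>s)] @ []"
      by (simp add: del_Cons dblk_def swp_def)
    show ?thesis unfolding e using b 1 by (intro bs_cancel[where xs="[]" and ys="[]" and a=a and s=s]) auto
  next
    case 2
    then have e: "del q [(a,s),(a,\<not>s)] = []"
      by (auto simp: del_Cons dblk_def swp_def)
    show ?thesis unfolding e by simp
  next
    case 3
    then have e: "del q [(a,s),(a,\<not>s)] = [] @ [(a - 1,s),(a - 1,\<not>s)] @ []"
      by (simp add: del_Cons dblk_def swp_def)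
    show ?thesis unfolding e using b 3 by (intro bs_cancel[where xs="[]" and ys="[]" and a="a - 1" and s=s]) auto
  qed
qed

lemma loc_del_braid: "a+2<Suc n \<Longrightarrow> q\<le>n \<Longrightarrow>
   beq n (del q [(a,True),(a+1,True),(a,True)]) (del q [(a+1,True),(a,True),(a+1,True)])"
proof -
  assume b: "a+2<Suc n" "q\<le>n"
  consider "q = a \<or> q = a + 1 \<or> q = a + 2" | "q < a" | "a + 2 < q" by linarith
  then show ?thesis
  proof cases
    case 1
    then have "del q [(a,True),(a+1,True),(a,True)] = del q [(a+1,True),(a,True),(a+1,True)]"
      by (elim disjE) (simp_all add: del_Cons dblk_def swp_def)
    then show ?thesis by simp
  next
    case 2
    then have eL: "del q [(a,True),(a+1,True),(a,True)] = [] @ [(a - 1,True),(a - 1+1,True),(a - 1,True)] @ []"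
      and eR: "del q [(a+1,True),(a,True),(a+1,True)] = [] @ [(a - 1+1,True),(a - 1,True),(a - 1+1,True)] @ []"
      by (simp_all add: del_Cons dblk_def swp_def)
    show ?thesis unfolding eL eR using b 2 by (intro bs_braid[where xs="[]" and ys="[]" and a="a - 1"]) auto
  next
    case 3
    then have eL: "del q [(a,True),(a+1,True),(a,True)] = [] @ [(a,True),(a+1,True),(a,True)] @ []"
      and eR: "del q [(a+1,True),(a,True),(a+1,True)] = [] @ [(a+1,True),(a,True),(a+1,True)] @ []"
      by (simp_all add: del_Cons dblk_def swp_def)
    show ?thesis unfolding eL eR using b 3 by (intro bs_braid[where xs="[]" and ys="[]" and a="a"]) auto
  qed
qed

lemma del_bstep: "bstep (Suc n) x y \<Longrightarrow> q \<le> n \<Longrightarrow> beq n (del q x) (del q y)"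
  unfolding bstep_def
proof (elim conjE)
  assume st: "braid_step x y" and bx: "bnd (Suc n) x" and "bnd (Suc n) y" and q: "q \<le> n"
  from st show ?thesis
  proof cases
    case (cancel xs a s ys)
    let ?q = "bpos xs q"
    have qq: "?q \<le> n"
    proof -
      have "?q < Suc n" using bx q cancel by (intro bpos_lt) auto
      then show ?thesis by simp
    qed
    have "beq n (del q xs @ del ?q [(a,s),(a,\<not>s)] @ del ?q ys) (del q xs @ [] @ del ?q ys)"
      using bx cancel qq q by (intro beq_ctx loc_del_cancel) (auto intro: bnd_del)
    then show ?thesis using cancel by (simp add: del_Cons)
  next
    case (comm a b xs s t ys)
    let ?q = "bpos xs q"
    have qq: "?q \<le> n"
    proof -
      have "?q < Suc n" using bx q comm by (intro bpos_lt) auto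
      then show ?thesis by simp
    qed
    have e: "swp b (swp a ?q) = swp a (swp b ?q)" using comm by (simp add: swp_comm)
    have s2: "swp b (swp a ?q) \<le> n" using qq bx comm by (auto simp: swp_def)
    have "beq n (del q xs @ del ?q [(a,s),(b,t)] @ del (swp b (swp a ?q)) ys)
        (del q xs @ del ?q [(b,t),(a,s)] @ del (swp b (swp a ?q)) ys)"
      using bx comm qq q s2 by (intro beq_ctx loc_del_comm) (auto intro!: bnd_del simp: far_def)
    then show ?thesis using comm e by (simp add: del_Cons)
  next
    case (braid xs a ys)
    let ?q = "bpos xs q"
    have qq: "?q \<le> n"
    proof -
      have "?q < Suc n" using bx q braid by (intro bpos_lt) auto
      then show ?thesis by simp
    qed
    have e: "swp a (swp (a+1) (swp a ?q)) = swp (a+1) (swp a (swp (a+1) ?q))" by (simp add: swp_def)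
    have s2: "swp a (swp (a+1) (swp a ?q)) \<le> n" using qq bx braid by (auto simp: swp_def)
    have "beq n (del q xs @ del ?q [(a,True),(a+1,True),(a,True)] @ del (swp a (swp (a+1) (swp a ?q))) ys)
        (del q xs @ del ?q [(a+1,True),(a,True),(a+1,True)] @ del (swp a (swp (a+1) (swp a ?q))) ys)"
      using bx braid qq q s2 by (intro beq_ctx loc_del_braid) (auto intro!: bnd_del)
    then show ?thesis using braid e by (simp add: del_Cons)
  qed
qed

lemma del_beq: "beq (Suc n) x y \<Longrightarrow> q \<le> n \<Longrightarrow> beq n (del q x) (del q y)"
  by (rule beq_induct_gen[where f="del q", OF _ _ equivp_beq]) (auto intro: del_bstep)

lemma loc_cc: "p \<noteq> q \<Longrightarrow> a + 1 < n \<Longrightarrow> p < n \<Longrightarrow> q < n \<Longrightarrow>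
  beq (Suc (Suc n)) (cable (cpos q p) (cblk q a s)) (cable (cpos p q) (cblk p a s))"
proof -
  assume pq: "p \<noteq> q" and b: "a + 1 < n" "p < n" "q < n"
  consider "p = a \<and> q = a + 1" | "p = a + 1 \<and> q = a" | "\<not> (p = a \<and> q = a + 1) \<and> \<not> (p = a + 1 \<and> q = a)" by auto
  then show ?thesis
  proof cases
    case 1
    then have eL: "cable (cpos q p) (cblk q a s) = [(a+1,s)] @ [(a,s),(a+2,s)] @ [(a+1,s)]"
      and eR: "cable (cpos p q) (cblk p a s) = [(a+1,s)] @ [(a+2,s),(a,s)] @ [(a+1,s)]"
      by (simp_all add: cable_Cons cblk_def swp_def cpos_def)
    show ?thesis unfolding eL eR using b
      by (intro bs_comm[where xs="[(a+1,s)]" and ys="[(a+1,s)]" and a=a and b="a+2" and s=s and t=s]) auto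
  next
    case 2
    then have eL: "cable (cpos q p) (cblk q a s) = [(a+1,s)] @ [(a+2,s),(a,s)] @ [(a+1,s)]"
      and eR: "cable (cpos p q) (cblk p a s) = [(a+1,s)] @ [(a,s),(a+2,s)] @ [(a+1,s)]"
      by (simp_all add: cable_Cons cblk_def swp_def cpos_def)
    show ?thesis unfolding eL eR using b
      by (intro bs_comm[where xs="[(a+1,s)]" and ys="[(a+1,s)]" and a="a+2" and b="a" and s=s and t=s]) auto
  next
    case 3
    have "p < a \<or> p = a \<or> p = a+1 \<or> a+1 < p" "q < a \<or> q = a \<or> q = a+1 \<or> a+1 < q" by linarith+
    then have "cable (cpos q p) (cblk q a s) = cable (cpos p q) (cblk p a s)" using pq 3
      by (elim disjE) (auto simp: cable_Cons cblk_def swp_def cpos_def)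
    then show ?thesis by simp
  qed
qed

lemma cable_cable: "p \<noteq> q \<Longrightarrow> p < n \<Longrightarrow> q < n \<Longrightarrow> bnd n w \<Longrightarrow>
  beq (Suc (Suc n)) (cable (cpos q p) (cable q w)) (cable (cpos p q) (cable p w))"
proof (induction w arbitrary: p q)
  case Nil then show ?case by simp
next
  case (Cons x w)
  obtain a s where x: "x = (a,s)" by (cases x)
  have ab: "a + 1 < n" "bnd n w" using Cons.prems x by auto
  let ?p = "swp a p" and ?q = "swp a q"
  have ne: "?p \<noteq> ?q" using Cons.prems by (simp add: swp_inj)
  have lt: "?p < n" "?q < n" using Cons.prems ab by (auto intro: swp_lt)
  have IH: "beq (Suc (Suc n)) (cable (cpos ?q ?p) (cable ?q w)) (cable (cpos ?p ?q) (cable ?p w))"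
    using Cons.IH ne lt ab by auto
  have eL: "cable (cpos q p) (cable q ((a,s)#w)) = cable (cpos q p) (cblk q a s) @ cable (cpos ?q ?p) (cable ?q w)"
    using Cons.prems by (simp add: cable_Cons bpos_cblk_other)
  have eR: "cable (cpos p q) (cable p ((a,s)#w)) = cable (cpos p q) (cblk p a s) @ cable (cpos ?p ?q) (cable ?p w)"
    using Cons.prems by (simp add: cable_Cons bpos_cblk_other)
  have cpl: "cpos q p < Suc n" "cpos p q < Suc n" using Cons.prems by (auto simp: cpos_def)
  show ?case unfolding x eL eR
    apply (rule beq_app)
       apply (rule loc_cc; use Cons.prems ab in simp)
      apply (rule IH)
     apply (rule bnd_cable[OF bnd_cblk]; use Cons.prems ab cpl in simp)
    apply (rule bnd_cable[OF bnd_cable]; use Cons.prems ab cpl lt in \<open>simp add: cpos_def\<close>)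
    done
qed

abbreviation nl where "nl \<equiv> num_leaves"

lemma nl_Leaf[simp]: "nl Leaf = 1" by (simp add: num_leaves_def)
lemma nl_Node[simp]: "nl (Node l r) = nl l + nl r" by (simp add: num_leaves_def)
lemma nl_pos[simp]: "0 < nl t" by (induction t) auto
lemma nl_ge1: "1 \<le> nl t" using nl_pos[of t] by linarith

fun ex :: "tree \<Rightarrow> nat \<Rightarrow> tree" where
  "ex Leaf i = (if i = 0 then Node Leaf Leaf else Leaf)"
| "ex (Node l r) i = (if i < nl l then Node (ex l i) r else Node l (ex r (i - nl l)))"

lemma leaves_length: "length (leaves t) = nl t" by (simp add: num_leaves_def)

lemma leaves_Node_nth: "i < nl l + nl r \<Longrightarrow> leaves (Node l r) ! i =
   (if i < nl l then False # (leaves l ! i) else True # (leaves r ! (i - nl l)))"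
  by (auto simp: nth_append num_leaves_def)

lemma expand_ex: "i < nl t \<Longrightarrow> expand t i = ex t i"
proof (induction t arbitrary: i)
  case Leaf then show ?case by (simp add: expand_def)
next
  case (Node l r)
  have "leaves (Node l r) ! i = (if i < nl l then False # (leaves l ! i) else True # (leaves r ! (i - nl l)))"
    using Node.prems by (intro leaves_Node_nth) simp
  then show ?case using Node by (simp add: expand_def del: leaves.simps)
qed

lemma ex_nonLeaf[simp]: "ex t i = Leaf \<longleftrightarrow> (t = Leaf \<and> i \<noteq> 0)"
  by (cases t) auto

lemma ex_nonLeaf2[simp]: "Leaf = ex t i \<longleftrightarrow> (t = Leaf \<and> i \<noteq> 0)"
  by (cases t) auto

lemma ex_big: "nl t \<le> i \<Longrightarrow> ex t i = t"
  by (induction t arbitrary: i) auto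

lemma nl_ex[simp]: "i < nl t \<Longrightarrow> nl (ex t i) = Suc (nl t)"
  by (induction t arbitrary: i) auto

lemma ex_inj: "i < nl t1 \<Longrightarrow> i < nl t2 \<Longrightarrow> ex t1 i = ex t2 i \<Longrightarrow> t1 = t2"
proof (induction t1 arbitrary: t2 i)
  case Leaf then show ?case by (cases t2) (auto split: if_splits)
next
  case (Node l r)
  show ?case
  proof (cases t2)
    case Leaf then show ?thesis using Node.prems by (auto split: if_splits)
  next
    case (Node l2 r2)
    note N = Node
    show ?thesis
    proof (cases "i < nl l")
      case True
      then have "i < nl l2" using Node.prems N by (auto split: if_splits)
      then show ?thesis using Node.prems N True Node.IH(1)[of i l2] by auto
    next
      case False
      then have "\<not> i < nl l2" using Node.prems N by (auto split: if_splits)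
      then show ?thesis using Node.prems N False Node.IH(2)[of "i - nl l" r2] by auto
    qed
  qed
qed

lemma ex_ex_comm: "i < j \<Longrightarrow> j < nl v \<Longrightarrow> ex (ex v j) i = ex (ex v i) (Suc j)"
proof (induction v arbitrary: i j)
  case Leaf then show ?case by simp
next
  case (Node l r)
  then show ?case by (auto simp: Suc_diff_le)
qed

lemma ex_eq_diff: "i < j \<Longrightarrow> i < nl t1 \<Longrightarrow> j < nl t2 \<Longrightarrow> ex t1 i = ex t2 j \<Longrightarrow>
   Suc i < j \<and> (\<exists>v. t1 = ex v (j - 1) \<and> t2 = ex v i \<and> j - 1 < nl v)"
proof (induction t1 arbitrary: t2 i j)
  case Leaf then show ?case by (cases t2) (auto split: if_splits)
next
  case (Node l r)
  show ?case
  proof (cases t2)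
    case Leaf then show ?thesis using Node.prems by (auto split: if_splits)
  next
    case (Node l2 r2)
    note N = Node
    show ?thesis
    proof (cases "i < nl l")
      case True
      note iT = True
      show ?thesis
      proof (cases "j < nl l2")
        case True
        then have "ex l i = ex l2 j" "r = r2" using Node.prems N iT by auto
        then obtain v where "Suc i < j" "l = ex v (j - 1)" "l2 = ex v i" "j - 1 < nl v"
          using Node.IH(1)[of i j l2] Node.prems True iT by auto
        then show ?thesis using N \<open>r = r2\<close> iT by (intro conjI exI[of _ "Node v r"]) auto
      next
        case False
        then have e: "ex l i = l2" "r = ex r2 (j - nl l2)" using Node.prems N iT by auto
        then have "nl l2 = Suc (nl l)" using iT nl_ex[of i l] by simp
        then show ?thesis using e N iT False Node.prems
          by (intro conjI exI[of _ "Node l r2"]) (auto simp: Suc_diff_le)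
      qed
    next
      case False
      note iF = False
      have jF: "\<not> j < nl l2"
      proof
        assume jT: "j < nl l2"
        then have "l = ex l2 j" using Node.prems N iF by auto
        then have "nl l = Suc (nl l2)" using jT by simp
        then show False using iF jT \<open>i < j\<close> by linarith
      qed
      then have e: "l = l2" "ex r (i - nl l) = ex r2 (j - nl l2)" using Node.prems N iF by auto
      have "Suc (i - nl l) < j - nl l \<and> (\<exists>v. r = ex v (j - nl l - 1) \<and> r2 = ex v (i - nl l) \<and> j - nl l - 1 < nl v)"
        using Node.prems iF jF N e by (intro Node.IH(2)) auto
      then obtain v where "Suc (i - nl l) < j - nl l" "r = ex v (j - nl l - 1)" "r2 = ex v (i - nl l)" "j - nl l - 1 < nl v"
        by blast
      then show ?thesis using N e iF jF
        by (intro conjI exI[of _ "Node l v"]) auto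
    qed
  qed
qed

fun subt :: "tree \<Rightarrow> tree \<Rightarrow> bool" where
  "subt Leaf t = True"
| "subt (Node l r) Leaf = False"
| "subt (Node l r) (Node l' r') = (subt l l' \<and> subt r r')"

lemma sub_refl[simp]: "subt t t" by (induction t) auto

lemma sub_trans: "subt a b \<Longrightarrow> subt b c \<Longrightarrow> subt a c"
proof (induction a b arbitrary: c rule: subt.induct)
  case (3 l r l' r') then show ?case by (cases c) auto
qed auto

lemma sub_nl: "subt a b \<Longrightarrow> nl a \<le> nl b"
  by (induction a b rule: subt.induct) (auto simp: Suc_le_eq)

lemma nl_one: "nl t = 1 \<Longrightarrow> t = Leaf"
proof (cases t)
  case (Node l r) then show "nl t = 1 \<Longrightarrow> t = Leaf" using nl_pos[of l] nl_pos[of r] by simp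
qed simp

lemma sub_nl_eq: "subt a b \<Longrightarrow> nl a = nl b \<Longrightarrow> a = b"
proof (induction a b rule: subt.induct)
  case (1 t) then show ?case using nl_one[of t] by simp
next
  case (3 l r l' r')
  then show ?case using sub_nl[of l l'] sub_nl[of r r'] by auto
qed auto

lemma sub_ex: "i < nl t \<Longrightarrow> subt t (ex t i)"
  by (induction t arbitrary: i) auto

lemma sub_ex_meet: "subt t (ex v i) \<Longrightarrow> subt t (ex v j) \<Longrightarrow> i \<noteq> j \<Longrightarrow> i < nl v \<Longrightarrow> j < nl v \<Longrightarrow> subt t v"
proof (induction v arbitrary: t i j)
  case Leaf then show ?case by simp
next
  case (Node l r)
  show ?case
  proof (cases t)
    case Leaf then show ?thesis by simp
  next
    case (Node a b)
    note N = Node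
    consider "i < nl l" "j < nl l" | "i < nl l" "\<not> j < nl l" | "\<not> i < nl l" "j < nl l" | "\<not> i < nl l" "\<not> j < nl l"
      by blast
    then show ?thesis
    proof cases
      case 1 then show ?thesis using Node.prems Node.IH(1)[of a i j] N by auto
    next
      case 2 then show ?thesis using Node.prems N by auto
    next
      case 3 then show ?thesis using Node.prems N by auto
    next
      case 4
      then have "i - nl l \<noteq> j - nl l" using Node.prems by auto
      then show ?thesis using 4 Node.prems Node.IH(2)[of b "i - nl l" "j - nl l"] N by auto
    qed
  qed
qed

lemma nonleaf_ex: "t \<noteq> Leaf \<Longrightarrow> \<exists>u c. c < nl u \<and> t = ex u c"
proof (induction t)
  case Leaf then show ?case by simp
next
  case (Node l r)
  show ?case
  proof (cases "l = Leaf")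
    case True
    show ?thesis
    proof (cases "r = Leaf")
      case True
      then show ?thesis using \<open>l = Leaf\<close> by (intro exI[of _ Leaf] exI[of _ 0]) auto
    next
      case False
      then obtain u c where "c < nl u" "r = ex u c" using Node.IH(2) by auto
      then show ?thesis by (intro exI[of _ "Node l u"] exI[of _ "nl l + c"]) auto
    qed
  next
    case False
    then obtain u c where "c < nl u" "l = ex u c" using Node.IH(1) by auto
    then show ?thesis by (intro exI[of _ "Node u r"] exI[of _ c]) auto
  qed
qed

lemma bottom_caret: "subt t u \<Longrightarrow> t \<noteq> u \<Longrightarrow> \<exists>u1 c. c < nl u1 \<and> u = ex u1 c \<and> subt t u1"
proof (induction u arbitrary: t)
  case Leaf then show ?case by (cases t) auto
next
  case (Node l r)
  show ?case
  proof (cases t)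
    case Leaf
    then show ?thesis using nonleaf_ex[of "Node l r"] by auto
  next
    case (Node a b)
    note N = Node
    show ?thesis
    proof (cases "a = l")
      case False
      then obtain l1 c where "c < nl l1" "l = ex l1 c" "subt a l1" using Node.IH(1)[of a] Node.prems N by auto
      then show ?thesis using Node.prems N by (intro exI[of _ "Node l1 r"] exI[of _ c]) auto
    next
      case True
      then have "b \<noteq> r" using Node.prems N by auto
      then obtain r1 c where "c < nl r1" "r = ex r1 c" "subt b r1" using Node.IH(2)[of b] Node.prems N by auto
      then show ?thesis using Node.prems N True by (intro exI[of _ "Node l r1"] exI[of _ "nl l + c"]) auto
    qed
  qed
qed

fun un :: "tree \<Rightarrow> tree \<Rightarrow> tree" where
  "un Leaf t = t"
| "un (Node a b) Leaf = Node a b"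
| "un (Node a b) (Node c d) = Node (un a c) (un b d)"

lemma sub_un1: "subt t (un t u)"
  by (induction t u rule: un.induct) auto
lemma sub_un2: "subt u (un t u)"
  by (induction t u rule: un.induct) auto
lemma un_least: "subt t w \<Longrightarrow> subt u w \<Longrightarrow> subt (un t u) w"
proof (induction t u arbitrary: w rule: un.induct)
  case (3 a b c d) then show ?case by (cases w) auto
qed auto

definition pure :: "nat \<Rightarrow> bword \<Rightarrow> bool" where
  "pure n w = (\<forall>p<n. bpos w p = p)"

definition PD :: "diag \<Rightarrow> bool" where
  "PD D = (case D of (S,w,T) \<Rightarrow> nl S = nl T \<and> bnd (nl S) w \<and> pure (nl S) w)"

lemma PD_simp: "PD (S,w,T) = (nl S = nl T \<and> bnd (nl S) w \<and> pure (nl S) w)"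
  by (simp add: PD_def)

lemma wf_diag_simp: "wf_diag (S,w,T) = (nl S = nl T \<and> bnd (nl S) w)"
  by (auto simp: wf_diag_def bnd_def)

lemma PD_wf: "PD D \<Longrightarrow> wf_diag D"
  by (cases D) (metis PD_simp wf_diag_simp)

fun caret :: "diag \<Rightarrow> nat \<Rightarrow> diag" where
  "caret (S,w,T) i = (ex S i, cable i w, ex T i)"

lemma cpos_inj: "cpos i a = cpos i b \<longleftrightarrow> a = b"
  by (auto simp: cpos_def)

lemma pure_cable: "pure n w \<Longrightarrow> i < n \<Longrightarrow> pure (Suc n) (cable i w)"
  unfolding pure_def
proof (intro allI impI)
  fix p assume pw: "\<forall>p<n. bpos w p = p" and i: "i < n" and p: "p < Suc n"
  consider "p < i" | "p = i" | "p = Suc i" | "Suc i < p" by linarith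
  then show "bpos (cable i w) p = p"
  proof cases
    case 1
    then have "bpos (cable i w) (cpos i p) = cpos (bpos w i) (bpos w p)" by (intro bpos_cable_other) simp
    then show ?thesis using 1 pw i by (simp add: cpos_def)
  next
    case 2 then show ?thesis using pw i by (simp add: bpos_cable_same)
  next
    case 3 then show ?thesis using pw i by (simp add: bpos_cable_Suc)
  next
    case 4
    then obtain q where q: "p = Suc q" "i < q" by (cases p) auto
    then have "bpos (cable i w) (cpos i q) = cpos (bpos w i) (bpos w q)" by (intro bpos_cable_other) simp
    then show ?thesis using q pw i p by (simp add: cpos_def)
  qed
qed

lemma pure_uncable: "pure (Suc n) (cable i w) \<Longrightarrow> i < n \<Longrightarrow> pure n w"
  unfolding pure_def
proof (intro allI impI)
  fix p assume pw: "\<forall>p<Suc n. bpos (cable i w) p = p" and i: "i < n" and p: "p < n"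
  have wi: "bpos w i = i" using pw[rule_format, of i] i by (simp add: bpos_cable_same)
  show "bpos w p = p"
  proof (cases "p = i")
    case True then show ?thesis using wi by simp
  next
    case False
    then have "bpos (cable i w) (cpos i p) = cpos (bpos w i) (bpos w p)" by (intro bpos_cable_other) simp
    moreover have "cpos i p < Suc n" using p by (simp add: cpos_def)
    ultimately have "cpos i p = cpos i (bpos w p)" using pw wi by simp
    then show ?thesis by (simp add: cpos_inj)
  qed
qed

lemma pure_del: "pure (Suc n) w \<Longrightarrow> q \<le> n \<Longrightarrow> pure n (del q w)"
  unfolding pure_def
proof (intro allI impI)
  fix p assume pw: "\<forall>p<Suc n. bpos w p = p" and q: "q \<le> n" and p: "p < n"
  define p0 where "p0 = (if p < q then p else Suc p)"
  have ne: "q \<noteq> p0" and dp: "dpos q p0 = p" and p0: "p0 < Suc n" using p by (auto simp: p0_def dpos_def)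
  have "bpos (del q w) (dpos q p0) = dpos (bpos w q) (bpos w p0)" using ne by (intro bpos_del_other)
  then show "bpos (del q w) p = p" using pw q p0 dp by simp
qed

lemma pure_beq: "beq n w w' \<Longrightarrow> pure n w \<Longrightarrow> pure n w'"
  using beq_bpos by (auto simp: pure_def)

lemma PD_caret': "PD (S,w,T) \<Longrightarrow> i < nl S \<Longrightarrow> PD (ex S i, cable i w, ex T i)"
proof -
  assume a: "PD (S,w,T)" "i < nl S"
  then have "nl S = nl T" "bnd (nl S) w" "pure (nl S) w" by (auto simp: PD_simp)
  then show ?thesis using a by (simp add: PD_simp bnd_cable pure_cable)
qed

lemma PD_caret: "PD (S,w,T) \<Longrightarrow> i < nl S \<Longrightarrow> PD (caret (S,w,T) i)"
  using PD_caret' by simp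

lemma caret_dstep: "PD (S,w,T) \<Longrightarrow> i < nl S \<Longrightarrow> dstep (S,w,T) (caret (S,w,T) i)"
proof -
  assume a: "PD (S,w,T)" "i < nl S"
  then have "bpos w i = i" "i < nl T" by (auto simp: PD_simp pure_def)
  moreover have "dstep (S,w,T) (expand S i, cable i w, expand T (bpos w i))"
    using a by (intro caret_move PD_wf) (auto simp: num_leaves_def)
  ultimately show ?thesis using a by (simp add: expand_ex)
qed

definition sim :: "diag \<Rightarrow> diag \<Rightarrow> bool" where
  "sim X Y = (PD X \<and> PD Y \<and> fst X = fst Y \<and> snd (snd X) = snd (snd Y) \<and>
      beq (nl (fst X)) (fst (snd X)) (fst (snd Y)))"

lemma sim_simp: "sim (S,w,T) (S',w',T') = (PD (S,w,T) \<and> PD (S',w',T') \<and> S = S' \<and> T = T' \<and> beq (nl S) w w')"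
  by (simp add: sim_def)

lemma sim_refl: "PD X \<Longrightarrow> sim X X" by (simp add: sim_def)
lemma sim_sym: "sim X Y \<Longrightarrow> sim Y X" by (auto simp: sim_def intro: beq_sym)
lemma sim_trans: "sim X Y \<Longrightarrow> sim Y Z \<Longrightarrow> sim X Z" by (auto simp: sim_def intro: beq_trans)

lemma beq_dequiv: "beq (nl S) w w' \<Longrightarrow> wf_diag (S,w,T) \<Longrightarrow> diag_equiv (S,w,T) (S,w',T)"
  unfolding beq_def diag_equiv_def
proof (induction rule: equivclp_induct)
  case base then show ?case by simp
next
  case (step y z)
  from step.hyps(2) have st: "braid_step y z \<or> braid_step z y" and b: "bnd (nl S) y" "bnd (nl S) z"
    by (auto simp: bstep_def)
  have wf: "wf_diag (S,y,T)" "wf_diag (S,z,T)" using step.prems b by (auto simp: wf_diag_simp)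
  from st have "dstep (S,y,T) (S,z,T) \<or> dstep (S,z,T) (S,y,T)"
    using wf by (auto intro: braid_move)
  then have "equivclp dstep (S,y,T) (S,z,T)"
    by (auto intro: r_into_equivclp equivclp_sym)
  then show ?case using step.IH step.prems by (auto intro: equivclp_trans)
qed

lemma sim_dequiv: "sim X Y \<Longrightarrow> diag_equiv X Y"
  by (cases X; cases Y) (auto simp: sim_simp intro!: beq_dequiv PD_wf)

definition redat :: "diag \<Rightarrow> diag \<Rightarrow> nat \<Rightarrow> bool" where
  "redat X Y i = (case X of (S,w,T) \<Rightarrow> case Y of (S',w',T') \<Rightarrow>
      i < nl S' \<and> S = ex S' i \<and> T = ex T' i \<and> beq (nl S) w (cable i w'))"

lemma redat_simp: "redat (S,w,T) (S',w',T') i = (i < nl S' \<and> S = ex S' i \<and> T = ex T' i \<and> beq (nl S) w (cable i w'))"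
  by (simp add: redat_def)

definition red :: "diag \<Rightarrow> diag \<Rightarrow> bool" where
  "red X Y = (PD X \<and> PD Y \<and> (\<exists>i. redat X Y i))"

lemma red_nl: "red X Y \<Longrightarrow> nl (fst X) = Suc (nl (fst Y))"
  by (cases X; cases Y) (auto simp: red_def redat_simp)

lemma red_caret: "PD Y \<Longrightarrow> i < nl (fst Y) \<Longrightarrow> red (caret Y i) Y"
  by (cases Y) (auto simp: red_def redat_simp PD_caret' PD_simp bnd_cable pure_cable)

lemma caret_sim: "sim X Y \<Longrightarrow> i < nl (fst X) \<Longrightarrow> sim (caret X i) (caret Y i)"
  by (cases X; cases Y) (auto simp: sim_simp PD_caret' PD_simp cable_beq bnd_cable pure_cable)

lemma redat_sim_left: "redat X Y i \<Longrightarrow> sim X X' \<Longrightarrow> redat X' Y i"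
  by (cases X; cases X'; cases Y) (auto simp: redat_simp sim_simp intro: beq_trans beq_sym)

lemma red_sim_left: "red X Y \<Longrightarrow> sim X X' \<Longrightarrow> red X' Y"
  unfolding red_def using redat_sim_left by (metis sim_def)

lemma redat_sim_right: "redat X Y i \<Longrightarrow> sim Y Y' \<Longrightarrow> redat X Y' i"
proof (cases X; cases Y; cases Y')
  fix S w T S1 w1 T1 S2 w2 T2
  assume r: "redat X Y i" "sim Y Y'" and e: "X = (S,w,T)" "Y = (S1,w1,T1)" "Y' = (S2,w2,T2)"
  then have i: "i < nl S1" and b: "beq (nl S1) w1 w2" and eq: "S1 = S2" "T1 = T2"
    and "S = ex S1 i" and b2: "beq (nl S) w (cable i w1)"
    by (auto simp: redat_simp sim_simp)
  then have "nl S = Suc (nl S1)" by simp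
  then have "beq (nl S) (cable i w1) (cable i w2)" using cable_beq[OF b i] by simp
  then show ?thesis using r e b2 eq by (auto simp: redat_simp intro: beq_trans)
qed

lemma red_sim_right: "red X Y \<Longrightarrow> sim Y Y' \<Longrightarrow> red X Y'"
  unfolding red_def using redat_sim_right by (metis sim_def)

lemma red_dequiv: "red X Y \<Longrightarrow> diag_equiv Y X"
proof -
  assume r: "red X Y"
  then obtain i where ri: "redat X Y i" and p: "PD X" "PD Y" by (auto simp: red_def)
  obtain S w T where Y: "Y = (S,w,T)" by (cases Y)
  have i: "i < nl S" using ri Y by (cases X) (auto simp: redat_simp)
  have "dstep Y (caret Y i)" using p i Y caret_dstep[of S w T i] by simp
  moreover have "sim (caret Y i) X" using ri p i Y PD_caret'[of S w T i]
    by (cases X) (auto simp: redat_simp sim_simp intro: beq_sym)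
  ultimately show ?thesis unfolding diag_equiv_def using sim_dequiv[unfolded diag_equiv_def]
    by (meson equivclp_trans r_into_equivclp)
qed

lemma LC_same: "redat X Y1 i \<Longrightarrow> redat X Y2 i \<Longrightarrow> PD X \<Longrightarrow> PD Y1 \<Longrightarrow> PD Y2 \<Longrightarrow> sim Y1 Y2"
proof (cases X; cases Y1; cases Y2)
  fix S w T S1 w1 T1 S2 w2 T2
  assume r: "redat X Y1 i" "redat X Y2 i" and p: "PD X" "PD Y1" "PD Y2"
    and e: "X = (S,w,T)" "Y1 = (S1,w1,T1)" "Y2 = (S2,w2,T2)"
  have R1: "i < nl S1 \<and> S = ex S1 i \<and> T = ex T1 i \<and> beq (nl S) w (cable i w1)"
    using r(1)[unfolded e redat_simp] .
  have R2: "i < nl S2 \<and> S = ex S2 i \<and> T = ex T2 i \<and> beq (nl S) w (cable i w2)"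
    using r(2)[unfolded e redat_simp] .
  have i: "i < nl S1" "i < nl S2" and s: "S = ex S1 i" "S = ex S2 i" "T = ex T1 i" "T = ex T2 i"
    and b: "beq (nl S) w (cable i w1)" "beq (nl S) w (cable i w2)" using R1 R2 by blast+
  have eqS: "S1 = S2" using i s ex_inj by metis
  have "nl S1 = nl T1" "nl S2 = nl T2" using p e by (auto simp: PD_simp)
  then have eqT: "T1 = T2" using i s ex_inj by metis
  have n: "nl S = Suc (nl S1)" using s i by simp
  have "beq (nl S1) (del (Suc i) (cable i w1)) (del (Suc i) (cable i w2))"
    using b n i by (intro del_beq) (auto intro: beq_trans beq_sym)
  then have "beq (nl S1) w1 w2" by (simp add: del_cable_Suc)
  then show "sim Y1 Y2" using e p eqS eqT by (simp add: sim_simp)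
qed

lemma LC_diff: "redat X Y1 i \<Longrightarrow> redat X Y2 j \<Longrightarrow> i < j \<Longrightarrow> PD X \<Longrightarrow> PD Y1 \<Longrightarrow> PD Y2 \<Longrightarrow>
  \<exists>Z1 Z2. redat Y1 Z1 (j - 1) \<and> redat Y2 Z2 i \<and> sim Z1 Z2"
proof (cases X; cases Y1; cases Y2)
  fix S w T S1 w1 T1 S2 w2 T2
  assume r: "redat X Y1 i" "redat X Y2 j" and ij: "i < j" and p: "PD X" "PD Y1" "PD Y2"
    and e: "X = (S,w,T)" "Y1 = (S1,w1,T1)" "Y2 = (S2,w2,T2)"
  have R1: "i < nl S1 \<and> S = ex S1 i \<and> T = ex T1 i \<and> beq (nl S) w (cable i w1)"
    using r(1)[unfolded e redat_simp] .
  have R2: "j < nl S2 \<and> S = ex S2 j \<and> T = ex T2 j \<and> beq (nl S) w (cable j w2)"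
    using r(2)[unfolded e redat_simp] .
  have i: "i < nl S1" "j < nl S2" and s: "S = ex S1 i" "S = ex S2 j" "T = ex T1 i" "T = ex T2 j"
    and b: "beq (nl S) w (cable i w1)" "beq (nl S) w (cable j w2)" using R1 R2 by blast+
  have pp: "nl S1 = nl T1" "nl S2 = nl T2" "bnd (nl S1) w1" "bnd (nl S2) w2" "pure (nl S1) w1" "pure (nl S2) w2"
    using p e by (auto simp: PD_simp)
  obtain V where V: "Suc i < j" "S1 = ex V (j - 1)" "S2 = ex V i" "j - 1 < nl V"
    using ex_eq_diff[OF ij i(1) i(2)] s by metis
  obtain V' where V': "T1 = ex V' (j - 1)" "T2 = ex V' i" "j - 1 < nl V'"
    using ex_eq_diff[OF ij, of T1 T2] s i pp by metis
  define n where "n = nl S1"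
  have n: "nl S = Suc n" "nl S2 = n" "n = Suc (nl V)" "nl V = nl V'"
    using s i V V' pp by (auto simp: n_def)
  define z1 where "z1 = del (Suc i) w2"
  define z2 where "z2 = del j w1"
  have a1: "beq n w1 (cable (j - 1) z1)"
  proof -
    have "beq n (del (Suc i) (cable i w1)) (del (Suc i) (cable j w2))"
      using b n i V by (intro del_beq) (auto intro: beq_trans beq_sym)
    moreover have "del (Suc i) (cable j w2) = cable (j - 1) z1"
      using del_cable_comm[of "Suc i" j w2] V by (simp add: cpos_def dpos_def z1_def)
    ultimately show ?thesis by (simp add: del_cable_Suc)
  qed
  have a2: "beq n w2 (cable i z2)"
  proof -
    have "beq n (del (Suc j) (cable j w2)) (del (Suc j) (cable i w1))"
      using b n i V by (intro del_beq) (auto intro: beq_trans beq_sym)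
    moreover have "del (Suc j) (cable i w1) = cable i z2"
      using del_cable_comm[of j i w1] ij by (simp add: cpos_def dpos_def z2_def)
    ultimately show ?thesis by (simp add: del_cable_Suc)
  qed
  have a3: "beq (nl V) z1 z2"
  proof -
    have "beq (nl V) (del j w1) (del j (cable (j - 1) z1))"
      using a1 n V by (intro del_beq) auto
    moreover have "del j (cable (j - 1) z1) = z1" using del_cable_Suc[of "j - 1" z1] V by simp
    ultimately show ?thesis by (simp add: z2_def beq_sym)
  qed
  have pz: "PD (V, z1, V')" "PD (V, z2, V')"
    using pp n V by (auto simp: PD_simp z1_def z2_def intro!: bnd_del pure_del)
  show ?thesis
    apply (rule exI[of _ "(V, z1, V')"], rule exI[of _ "(V, z2, V')"])
    using a1 a2 a3 pz V V' n e by (auto simp: redat_simp sim_simp n_def)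
qed

lemma LC: "red X Y1 \<Longrightarrow> red X Y2 \<Longrightarrow> sim Y1 Y2 \<or> (\<exists>Z1 Z2. red Y1 Z1 \<and> red Y2 Z2 \<and> sim Z1 Z2)"
proof -
  assume r: "red X Y1" "red X Y2"
  then obtain i j where ri: "redat X Y1 i" "redat X Y2 j" and p: "PD X" "PD Y1" "PD Y2"
    by (auto simp: red_def)
  consider "i = j" | "i < j" | "j < i" by linarith
  then show ?thesis
  proof cases
    case 1 then show ?thesis using LC_same ri p by blast
  next
    case 2
    then obtain Z1 Z2 where "redat Y1 Z1 (j - 1)" "redat Y2 Z2 i" "sim Z1 Z2"
      using LC_diff[OF ri 2 p] by blast
    moreover then have "red Y1 Z1" "red Y2 Z2" using p by (auto simp: red_def sim_def)
    ultimately show ?thesis by blast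
  next
    case 3
    then obtain Z1 Z2 where "redat Y2 Z1 (i - 1)" "redat Y1 Z2 j" "sim Z1 Z2"
      using LC_diff[OF ri(2) ri(1) 3 p(1) p(3) p(2)] by blast
    moreover then have "red Y1 Z2" "red Y2 Z1" using p by (auto simp: red_def sim_def)
    ultimately show ?thesis using sim_sym by blast
  qed
qed

definition irr :: "diag \<Rightarrow> bool" where "irr X = (PD X \<and> (\<nexists>Y. red X Y))"
definition nf :: "diag \<Rightarrow> diag \<Rightarrow> bool" where "nf X Z = (red\<^sup>*\<^sup>* X Z \<and> irr Z)"

lemma red_PD: "red X Y \<Longrightarrow> PD X \<and> PD Y" by (simp add: red_def)

lemma reds_PD: "red\<^sup>*\<^sup>* X Y \<Longrightarrow> PD X \<Longrightarrow> PD Y"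
  by (induction rule: rtranclp_induct) (auto simp: red_def)

lemma reds_nl: "red\<^sup>*\<^sup>* X Y \<Longrightarrow> nl (fst Y) \<le> nl (fst X)"
  by (induction rule: rtranclp_induct) (auto dest: red_nl)

lemma nf_exists: "PD X \<Longrightarrow> \<exists>Z. nf X Z"
proof (induction "nl (fst X)" arbitrary: X rule: less_induct)
  case less
  show ?case
  proof (cases "irr X")
    case True then show ?thesis by (intro exI[of _ X]) (simp add: nf_def)
  next
    case False
    then obtain Y where "red X Y" using less.prems by (auto simp: irr_def)
    moreover then obtain Z where "nf Y Z" using less.hyps red_nl red_PD by (metis lessI)
    ultimately have "nf X Z" unfolding nf_def by (meson converse_rtranclp_into_rtranclp)
    then show ?thesis by blast
  qed
qed

lemma irr_sim: "irr X \<Longrightarrow> sim X X' \<Longrightarrow> irr X'"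
proof -
  assume a: "irr X" "sim X X'"
  have "\<not> red X' Y" for Y
  proof
    assume "red X' Y"
    then have "red X Y" using red_sim_left sim_sym a(2) by blast
    then show False using a(1) unfolding irr_def by blast
  qed
  then show ?thesis using a by (auto simp: irr_def sim_def)
qed

lemma nf_sim: "sim X X' \<Longrightarrow> nf X Z \<Longrightarrow> \<exists>Z'. nf X' Z' \<and> sim Z Z'"
proof -
  assume s: "sim X X'" and n: "nf X Z"
  from n have "red\<^sup>*\<^sup>* X Z" "irr Z" by (auto simp: nf_def)
  then show ?thesis
  proof (cases rule: converse_rtranclpE)
    case base
    then have "nf X' X'" using s \<open>irr Z\<close> irr_sim by (auto simp: nf_def)
    then show ?thesis using base s by blast
  next
    case (step Y)
    then have "red X' Y" using s red_sim_left by blast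
    then have "nf X' Z" using step \<open>irr Z\<close> unfolding nf_def by (meson converse_rtranclp_into_rtranclp)
    moreover have "sim Z Z" using \<open>irr Z\<close> by (auto simp: irr_def intro: sim_refl)
    ultimately show ?thesis by blast
  qed
qed

lemma nf_unique: "nf X Z1 \<Longrightarrow> nf X Z2 \<Longrightarrow> sim Z1 Z2"
proof (induction "nl (fst X)" arbitrary: X Z1 Z2 rule: less_induct)
  case less
  from less.prems have r1: "red\<^sup>*\<^sup>* X Z1" "irr Z1" and r2: "red\<^sup>*\<^sup>* X Z2" "irr Z2" by (auto simp: nf_def)
  show ?case
  proof (cases "\<exists>Y. red X Y")
    case False
    then have "X = Z1" "X = Z2" using r1 r2 by (auto elim: converse_rtranclpE)
    then show ?thesis using r1 by (auto simp: irr_def intro: sim_refl)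
  next
    case True
    then have "X \<noteq> Z1" "X \<noteq> Z2" using r1 r2 by (auto simp: irr_def)
    then obtain Y1 Y2 where y: "red X Y1" "red\<^sup>*\<^sup>* Y1 Z1" "red X Y2" "red\<^sup>*\<^sup>* Y2 Z2"
      using r1 r2 by (metis converse_rtranclpE)
    have lt: "nl (fst Y1) < nl (fst X)" "nl (fst Y2) < nl (fst X)" using red_nl[OF y(1)] red_nl[OF y(3)] by auto
    have n1: "nf Y1 Z1" "nf Y2 Z2" using y r1 r2 by (auto simp: nf_def)
    from LC[OF y(1) y(3)] show ?thesis
    proof
      assume s: "sim Y1 Y2"
      obtain Z1' where "nf Y2 Z1'" "sim Z1 Z1'" using nf_sim[OF s n1(1)] by blast
      moreover have "sim Z1' Z2" using less.hyps[OF lt(2)] \<open>nf Y2 Z1'\<close> n1(2) by blast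
      ultimately show ?thesis using sim_trans by blast
    next
      assume "\<exists>W1 W2. red Y1 W1 \<and> red Y2 W2 \<and> sim W1 W2"
      then obtain W1 W2 where w: "red Y1 W1" "red Y2 W2" "sim W1 W2" by blast
      obtain Q where q: "nf W1 Q" using nf_exists w red_PD by blast
      have "nf Y1 Q" using q w by (auto simp: nf_def)
      then have s1: "sim Z1 Q" using less.hyps[OF lt(1)] n1(1) by blast
      obtain Q' where q': "nf W2 Q'" "sim Q Q'" using nf_sim[OF w(3) q] by blast
      have "nf Y2 Q'" using q' w by (auto simp: nf_def)
      then have s2: "sim Q' Z2" using less.hyps[OF lt(2)] n1(2) by blast
      show ?thesis using s1 q'(2) s2 by (meson sim_trans)
    qed
  qed
qed

lemma dequiv_sym: "diag_equiv X Y \<Longrightarrow> diag_equiv Y X"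
  by (simp add: diag_equiv_def equivclp_sym)
lemma dequiv_trans: "diag_equiv X Y \<Longrightarrow> diag_equiv Y Z \<Longrightarrow> diag_equiv X Z"
  unfolding diag_equiv_def by (rule equivclp_trans)
lemma dequiv_refl[simp]: "diag_equiv X X"
  by (simp add: diag_equiv_def)
lemma dstep_dequiv: "dstep X Y \<Longrightarrow> diag_equiv X Y"
  by (simp add: diag_equiv_def r_into_equivclp)

lemma dstep_PD: "dstep X Y \<Longrightarrow> PD X \<longleftrightarrow> PD Y"
proof (induction rule: dstep.induct)
  case (braid_move Tp w Tm w')
  then have "bpos w = bpos w'" using braid_step_bpos by blast
  then show ?case using braid_move by (auto simp: PD_simp wf_diag_simp pure_def)
next
  case (caret_move Tp w Tm i)
  have wf: "nl Tp = nl Tm" "bnd (nl Tp) w" using caret_move by (auto simp: wf_diag_simp)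
  have e: "expand Tp i = ex Tp i" "nl (ex Tp i) = Suc (nl Tp)" using caret_move by (auto simp: expand_ex)
  show ?case
  proof
    assume p: "PD (Tp, w, Tm)"
    then have "bpos w i = i" using caret_move by (auto simp: PD_simp pure_def)
    then show "PD (expand Tp i, cable i w, expand Tm (bpos w i))"
      using PD_caret'[OF p caret_move(2)] caret_move wf by (simp add: expand_ex)
  next
    assume p: "PD (expand Tp i, cable i w, expand Tm (bpos w i))"
    then have "pure (nl (expand Tp i)) (cable i w)" unfolding PD_simp by blast
    then have "pure (Suc (nl Tp)) (cable i w)" using e by simp
    then have "pure (nl Tp) w" using caret_move(2) by (rule pure_uncable)
    then show "PD (Tp, w, Tm)" using wf by (simp add: PD_simp)
  qed
qed

lemma dstep_nf: "dstep X Y \<Longrightarrow> PD X \<Longrightarrow> nf X Z \<Longrightarrow> nf Y Z' \<Longrightarrow> sim Z Z'"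
proof (induction rule: dstep.induct)
  case (braid_move Tp w Tm w')
  have "PD (Tp, w', Tm)" using dstep_PD[OF dstep.braid_move[OF braid_move.hyps]] braid_move.prems by simp
  moreover have "bstep (nl Tp) w w'" using braid_move by (auto simp: bstep_def wf_diag_simp)
  ultimately have "sim (Tp, w, Tm) (Tp, w', Tm)" using braid_move.prems
    by (simp add: sim_simp bstep_beq)
  then obtain Z'' where "nf (Tp, w', Tm) Z''" "sim Z Z''" using nf_sim braid_move.prems by blast
  then show ?case using nf_unique braid_move.prems sim_trans by blast
next
  case (caret_move Tp w Tm i)
  have "bpos w i = i" using caret_move by (auto simp: PD_simp pure_def)
  then have e: "(expand Tp i, cable i w, expand Tm (bpos w i)) = caret (Tp, w, Tm) i"
    using caret_move by (auto simp: expand_ex PD_simp)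
  have "red (caret (Tp, w, Tm) i) (Tp, w, Tm)" using caret_move by (intro red_caret) auto
  then have "nf (caret (Tp, w, Tm) i) Z" using caret_move.prems unfolding nf_def
    by (meson converse_rtranclp_into_rtranclp)
  moreover have "nf (caret (Tp, w, Tm) i) Z'" using caret_move.prems(3) e by simp
  ultimately show ?case using nf_unique by blast
qed

lemma equiv_nf: "diag_equiv X Y \<Longrightarrow> PD X \<Longrightarrow> PD Y \<and> (\<forall>Z Z'. nf X Z \<longrightarrow> nf Y Z' \<longrightarrow> sim Z Z')"
  unfolding diag_equiv_def
proof (induction rule: equivclp_induct)
  case base then show ?case using nf_unique by blast
next
  case (step y z)
  then have py: "PD y" and IH: "\<forall>Z Z'. nf X Z \<longrightarrow> nf y Z' \<longrightarrow> sim Z Z'" by auto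
  have pz: "PD z" using step.hyps(2)
  proof
    assume "dstep y z" then show ?thesis using dstep_PD[of y z] py by simp
  next
    assume "dstep z y" then show ?thesis using dstep_PD[of z y] py by simp
  qed
  have "sim Z Z''" if "nf X Z" "nf z Z''" for Z Z''
  proof -
    obtain W where w: "nf y W" using nf_exists py by blast
    have s1: "sim Z W" using IH that w by blast
    have s2: "sim W Z''"
      using step.hyps(2)
    proof
      assume "dstep y z" then show ?thesis using dstep_nf[of y z W Z''] py w that(2) by blast
    next
      assume "dstep z y" then have "sim Z'' W" using dstep_nf[of z y Z'' W] pz w that(2) by blast
      then show ?thesis by (rule sim_sym)
    qed
    show ?thesis using sim_trans[OF s1 s2] .
  qed
  then show ?case using pz by blast
qed

lemma equiv_PD: "diag_equiv X Y \<Longrightarrow> PD X \<Longrightarrow> PD Y"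
  using equiv_nf by blast

lemma irr_nf: "irr Z \<Longrightarrow> nf Z Z" by (simp add: nf_def)

lemma equiv_irr: "diag_equiv Z X \<Longrightarrow> irr Z \<Longrightarrow> \<exists>Z'. red\<^sup>*\<^sup>* X Z' \<and> sim Z' Z"
proof -
  assume e: "diag_equiv Z X" and i: "irr Z"
  have pz: "PD Z" using i by (simp add: irr_def)
  have px: "PD X" using equiv_PD[OF e pz] .
  obtain Z' where n: "nf X Z'" using nf_exists px by blast
  have "sim Z Z'" using equiv_nf[OF e pz] irr_nf[OF i] n by blast
  then show ?thesis using n sim_sym unfolding nf_def by blast
qed

lemma sim_nl: "sim X Y \<Longrightarrow> nl (fst X) = nl (fst Y)" by (simp add: sim_def)

lemma equiv_irr_nl: "diag_equiv Z X \<Longrightarrow> irr Z \<Longrightarrow> nl (fst Z) \<le> nl (fst X)"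
proof -
  assume "diag_equiv Z X" "irr Z"
  then obtain Z' where "red\<^sup>*\<^sup>* X Z'" "sim Z' Z" using equiv_irr by blast
  then show ?thesis using reds_nl[of X Z'] sim_nl[of Z' Z] by simp
qed

lemma elt_eq: "diag_equiv X Y \<Longrightarrow> elt X = elt Y"
  unfolding elt_def using dequiv_sym dequiv_trans by blast

lemma NN_irr: "irr Z \<Longrightarrow> NN (elt Z) = nl (fst Z)"
  unfolding NN_def
proof (rule Least_equality)
  assume "irr Z"
  show "\<exists>D\<in>elt Z. dleaves D = nl (fst Z)" by (rule bexI[of _ Z]) (auto simp: elt_def dleaves_def)
next
  fix y assume i: "irr Z" and "\<exists>D\<in>elt Z. dleaves D = y"
  then obtain D where d: "D \<in> elt Z" "dleaves D = y" by blast
  have "nl (fst Z) \<le> nl (fst D)" using d(1) i by (intro equiv_irr_nl) (auto simp: elt_def)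
  then show "nl (fst Z) \<le> y" using d(2) by (simp add: dleaves_def)
qed

lemma NN_le: "D \<in> X \<Longrightarrow> NN X \<le> dleaves D"
  unfolding NN_def by (rule Least_le) blast

fun sel :: "bool \<Rightarrow> diag \<Rightarrow> tree" where
  "sel True (S,w,T) = S"
| "sel False (S,w,T) = T"

lemma sel_caret[simp]: "sel b (caret X i) = ex (sel b X) i"
  by (cases X; cases b) auto

lemma sel_sim: "sim X Y \<Longrightarrow> sel b X = sel b Y"
  by (cases X; cases Y; cases b) (auto simp: sim_simp)

lemma sel_nl: "PD X \<Longrightarrow> nl (sel b X) = nl (fst X)"
  by (cases X; cases b) (auto simp: PD_simp)

lemma caret_PD: "PD X \<Longrightarrow> i < nl (fst X) \<Longrightarrow> PD (caret X i)"
  by (cases X) (auto intro: PD_caret')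

lemma fst_caret: "fst (caret X i) = ex (fst X) i"
  by (cases X) auto

lemma redat_iff: "PD X \<Longrightarrow> PD Y \<Longrightarrow> redat X Y i \<longleftrightarrow> (i < nl (fst Y) \<and> sim X (caret Y i))"
proof (cases X; cases Y)
  fix S w T S' w' T'
  assume p: "PD X" "PD Y" and e: "X = (S,w,T)" "Y = (S',w',T')"
  show ?thesis
  proof
    assume r: "redat X Y i"
    then have "i < nl S'" "S = ex S' i" "T = ex T' i" "beq (nl S) w (cable i w')"
      using e by (auto simp: redat_simp)
    then show "i < nl (fst Y) \<and> sim X (caret Y i)"
      using p e PD_caret[of S' w' T' i] by (auto simp: sim_simp)
  next
    assume r: "i < nl (fst Y) \<and> sim X (caret Y i)"
    then show "redat X Y i" using e by (auto simp: redat_simp sim_simp)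
  qed
qed

lemma caret_comm: "PD X \<Longrightarrow> i < j \<Longrightarrow> j < nl (fst X) \<Longrightarrow>
   sim (caret (caret X j) i) (caret (caret X i) (Suc j))"
proof (cases X)
  fix S w T assume p: "PD X" and ij: "i < j" "j < nl (fst X)" and e: "X = (S,w,T)"
  have pp: "nl S = nl T" "bnd (nl S) w" using p e by (auto simp: PD_simp)
  have t: "ex (ex S j) i = ex (ex S i) (Suc j)" "ex (ex T j) i = ex (ex T i) (Suc j)"
    using ij e pp by (auto intro: ex_ex_comm)
  have "beq (Suc (Suc (nl S))) (cable (cpos j i) (cable j w)) (cable (cpos i j) (cable i w))"
    using ij e pp by (intro cable_cable) auto
  then have b: "beq (Suc (Suc (nl S))) (cable i (cable j w)) (cable (Suc j) (cable i w))"
    using ij by (simp add: cpos_def)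
  have "PD (caret X j)" using p ij e by (intro caret_PD) auto
  then have p1: "PD (caret (caret X j) i)" by (rule caret_PD) (use ij e in \<open>auto simp: fst_caret\<close>)
  have "PD (caret X i)" using p ij e by (intro caret_PD) auto
  then have p2: "PD (caret (caret X i) (Suc j))" by (rule caret_PD) (use ij e in \<open>auto simp: fst_caret\<close>)
  show ?thesis using p1 p2 t b e ij by (simp add: sim_simp)
qed

lemma reds_sub: "red\<^sup>*\<^sup>* X Y \<Longrightarrow> subt (sel b Y) (sel b X)"
proof (induction rule: rtranclp_induct)
  case base then show ?case by simp
next
  case (step y z)
  then obtain i where ri: "redat y z i" "PD y" "PD z" by (auto simp: red_def)
  have "sel b y = ex (sel b z) i" using ri
    by (cases y; cases z; cases b) (auto simp: redat_simp)
  moreover have "i < nl (fst z)" using ri(1) by (cases y; cases z) (simp add: redat_simp)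
  moreover have "nl (sel b z) = nl (fst z)" using sel_nl \<open>PD z\<close> by blast
  ultimately have "sel b y = ex (sel b z) i" "i < nl (sel b z)" by auto
  then have "subt (sel b z) (sel b y)" using sub_ex by simp
  then show ?case using step.IH sub_trans by blast
qed

lemma equiv_sub: "diag_equiv Z X \<Longrightarrow> irr Z \<Longrightarrow> subt (sel b Z) (sel b X)"
proof -
  assume "diag_equiv Z X" "irr Z"
  then obtain Z' where "red\<^sup>*\<^sup>* X Z'" "sim Z' Z" using equiv_irr by blast
  then show ?thesis using reds_sub[of X Z' b] sel_sim[of Z' Z b] by simp
qed

lemma G3: "diag_equiv Z X \<Longrightarrow> irr Z \<Longrightarrow> sel b X = ex U1 c \<Longrightarrow> c < nl U1 \<Longrightarrow> subt (sel b Z) U1 \<Longrightarrow>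
   \<exists>Y. redat X Y c \<and> PD Y"
proof (induction "nl (fst X)" arbitrary: X U1 c rule: less_induct)
  case less
  have pz: "PD Z" using less.prems by (simp add: irr_def)
  have px: "PD X" using equiv_PD[OF less.prems(1) pz] .
  obtain Z' where z': "red\<^sup>*\<^sup>* X Z'" "sim Z' Z" using equiv_irr less.prems by blast
  show ?case
  proof (cases "X = Z'")
    case True
    then have "sel b X = sel b Z" using z' sel_sim by blast
    moreover have "nl (sel b X) = Suc (nl U1)" using less.prems(3,4) by simp
    ultimately have "nl (sel b Z) = Suc (nl U1)" by simp
    moreover have "nl (sel b Z) \<le> nl U1" using less.prems sub_nl by blast
    ultimately show ?thesis by simp
  next
    case False
    then obtain X1 where "red X X1" using z' by (metis converse_rtranclpE)
    then obtain j where rj: "redat X X1 j" and p1: "PD X1" by (auto simp: red_def)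
    have j: "j < nl (fst X1)" and sx: "sim X (caret X1 j)" using redat_iff[OF px p1] rj by auto
    have selX: "sel b X = ex (sel b X1) j" using sel_sim[OF sx] by simp
    have jl: "j < nl (sel b X1)" using j sel_nl[OF p1] by simp
    have eq1: "diag_equiv Z X1"
      using less.prems(1) red_dequiv[OF \<open>red X X1\<close>] dequiv_sym dequiv_trans by blast
    have subZ1: "subt (sel b Z) (sel b X1)" using equiv_sub[OF eq1] less.prems by blast
    have lt: "nl (fst X1) < nl (fst X)" using red_nl[OF \<open>red X X1\<close>] by simp
    consider "j = c" | "j < c" | "c < j" by linarith
    then show ?thesis
    proof cases
      case 1 then show ?thesis using rj p1 by blast
    next
      case 2
      have "ex (sel b X1) j = ex U1 c" using selX less.prems(3) by simp
      then obtain V where V: "Suc j < c" "sel b X1 = ex V (c - 1)" "U1 = ex V j" "c - 1 < nl V"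
        using ex_eq_diff[OF 2 jl less.prems(4)] by blast
      have "subt (sel b Z) V" using sub_ex_meet[of "sel b Z" V "c - 1" j] subZ1 V less.prems(5) by auto
      then obtain X2 where r2: "redat X1 X2 (c - 1)" and p2: "PD X2"
        using less.hyps[OF lt eq1 less.prems(2) V(2) V(4)] by blast
      have c2: "c - 1 < nl (fst X2)" and s2: "sim X1 (caret X2 (c - 1))" using redat_iff[OF p1 p2] r2 by auto
      have "sim (caret X1 j) (caret (caret X2 (c - 1)) j)" using caret_sim[OF s2] j by simp
      moreover have "sim (caret (caret X2 (c - 1)) j) (caret (caret X2 j) c)"
        using caret_comm[OF p2, of j "c - 1"] V c2 by simp
      ultimately have sx2: "sim X (caret (caret X2 j) c)" using sx sim_trans by blast
      have p3: "PD (caret X2 j)" using p2 c2 V by (intro caret_PD) auto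
      have "c < nl (fst (caret X2 j))" using c2 V by (simp add: fst_caret)
      then have "redat X (caret X2 j) c" using redat_iff[OF px p3] sx2 by simp
      then show ?thesis using p3 by blast
    next
      case 3
      have "ex U1 c = ex (sel b X1) j" using selX less.prems(3) by simp
      then obtain V where V: "Suc c < j" "U1 = ex V (j - 1)" "sel b X1 = ex V c" "j - 1 < nl V"
        using ex_eq_diff[OF 3 less.prems(4) jl] by blast
      have cV: "c < nl V" using V by simp
      have "subt (sel b Z) V" using sub_ex_meet[of "sel b Z" V c "j - 1"] subZ1 V less.prems(5) by auto
      then obtain X2 where r2: "redat X1 X2 c" and p2: "PD X2"
        using less.hyps[OF lt eq1 less.prems(2) V(3) cV] by blast
      have c2: "c < nl (fst X2)" and s2: "sim X1 (caret X2 c)" using redat_iff[OF p1 p2] r2 by auto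
      have "ex V c = ex (sel b X2) c" using V(3) sel_sim[OF s2, of b] by simp
      moreover have "c < nl (sel b X2)" using c2 sel_nl[OF p2] by simp
      ultimately have "V = sel b X2" using cV ex_inj by blast
      then have nlx2: "nl (fst X2) = nl V" using sel_nl[OF p2] by simp
      have "sim (caret X1 j) (caret (caret X2 c) j)" using caret_sim[OF s2] j by simp
      moreover have "sim (caret (caret X2 (j - 1)) c) (caret (caret X2 c) j)"
        using caret_comm[OF p2, of c "j - 1"] V nlx2 by simp
      ultimately have sx2: "sim X (caret (caret X2 (j - 1)) c)" using sx sim_trans sim_sym by blast
      have p3: "PD (caret X2 (j - 1))" using p2 nlx2 V by (intro caret_PD) auto
      have "c < nl (fst (caret X2 (j - 1)))" using nlx2 V by (simp add: fst_caret)
      then have "redat X (caret X2 (j - 1)) c" using redat_iff[OF px p3] sx2 by simp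
      then show ?thesis using p3 by blast
    qed
  qed
qed

lemma redat_dequiv: "redat X Y c \<Longrightarrow> PD X \<Longrightarrow> PD Y \<Longrightarrow> diag_equiv X Y"
proof -
  assume "redat X Y c" "PD X" "PD Y"
  then have "red X Y" unfolding red_def by blast
  then show ?thesis by (rule dequiv_sym[OF red_dequiv])
qed

lemma UE: "diag_equiv Z X \<Longrightarrow> diag_equiv Z X' \<Longrightarrow> irr Z \<Longrightarrow> sel b X = sel b X' \<Longrightarrow> sim X X'"
proof (induction "nl (fst X)" arbitrary: X X' rule: less_induct)
  case less
  have pz: "PD Z" using less.prems by (simp add: irr_def)
  have px: "PD X" using equiv_PD[OF less.prems(1) pz] .
  have px': "PD X'" using equiv_PD[OF less.prems(2) pz] .
  have irrcase: "sim W Z" if w: "diag_equiv Z W" "sel b W = sel b Z" for W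
  proof -
    obtain Z1 where z1: "red\<^sup>*\<^sup>* W Z1" "sim Z1 Z" using equiv_irr w less.prems(3) by blast
    show ?thesis
    proof (cases "W = Z1")
      case True then show ?thesis using z1 by simp
    next
      case False
      then obtain W1 where r: "red W W1" using z1 by (metis converse_rtranclpE)
      have pw: "PD W" "PD W1" using r by (auto simp: red_def)
      have "diag_equiv Z W1" using w(1) red_dequiv[OF r] dequiv_sym dequiv_trans by blast
      then have "subt (sel b Z) (sel b W1)" using equiv_sub less.prems(3) by blast
      then have "nl (sel b Z) \<le> nl (sel b W1)" by (rule sub_nl)
      moreover have "nl (fst W) = Suc (nl (fst W1))" using red_nl[OF r] .
      ultimately show ?thesis using sel_nl[OF pw(1), of b] sel_nl[OF pw(2), of b] w(2) by simp
    qed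
  qed
  show ?case
  proof (cases "sel b X = sel b Z")
    case True
    then have "sim X Z" "sim X' Z" using irrcase less.prems by auto
    then show ?thesis using sim_trans sim_sym by blast
  next
    case False
    have "subt (sel b Z) (sel b X)" using equiv_sub less.prems by blast
    then obtain U1 c where u: "c < nl U1" "sel b X = ex U1 c" "subt (sel b Z) U1"
      using bottom_caret False by metis
    obtain Y where y: "redat X Y c" "PD Y" using G3[OF less.prems(1,3) u(2,1,3)] by blast
    obtain Y' where y': "redat X' Y' c" "PD Y'" using G3[OF less.prems(2,3), of b U1 c] u less.prems(4) by auto
    have sy: "c < nl (fst Y)" "sim X (caret Y c)" using redat_iff[OF px y(2)] y by auto
    have sy': "c < nl (fst Y')" "sim X' (caret Y' c)" using redat_iff[OF px' y'(2)] y' by auto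
    have "ex (sel b Y) c = ex U1 c" using sel_sim[OF sy(2), of b] u by simp
    then have sY: "sel b Y = U1" using ex_inj sy(1) sel_nl[OF y(2), of b] u(1) by metis
    have "ex (sel b Y') c = ex U1 c" using sel_sim[OF sy'(2), of b] u less.prems(4) by simp
    then have sY': "sel b Y' = U1" using ex_inj sy'(1) sel_nl[OF y'(2), of b] u(1) by metis
    have eY: "diag_equiv Z Y" using less.prems(1) redat_dequiv[OF y(1) px y(2)] dequiv_trans by blast
    have eY': "diag_equiv Z Y'" using less.prems(2) redat_dequiv[OF y'(1) px' y'(2)] dequiv_trans by blast
    have lt: "nl (fst Y) < nl (fst X)" using sim_nl[OF sy(2)] sy(1) by (simp add: fst_caret)
    have "sim Y Y'" using less.hyps[OF lt eY eY' less.prems(3)] sY sY' by simp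
    then have "sim (caret Y c) (caret Y' c)" using caret_sim sy(1) by blast
    then show ?thesis using sy(2) sy'(2) sim_trans sim_sym by blast
  qed
qed

fun dprod :: "diag \<Rightarrow> diag \<Rightarrow> diag" where
  "dprod (A, w, M) (M', w', B) = (A, w @ w', B)"

lemma PD_prod: "PD X \<Longrightarrow> PD Y \<Longrightarrow> sel False X = sel True Y \<Longrightarrow> PD (dprod X Y)"
  by (cases X; cases Y) (auto simp: PD_simp pure_def)

lemma prod_sim: "sim X X' \<Longrightarrow> sim Y Y' \<Longrightarrow> sel False X = sel True Y \<Longrightarrow> sim (dprod X Y) (dprod X' Y')"
proof (cases X; cases X'; cases Y; cases Y')
  fix A w M A' w1 M' N v B N' v' B'
  assume s: "sim X X'" "sim Y Y'" and m: "sel False X = sel True Y"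
    and e: "X = (A,w,M)" "X' = (A',w1,M')" "Y = (N,v,B)" "Y' = (N',v',B')"
  have a: "A = A'" "M = M'" "N = N'" "B = B'" "beq (nl A) w w1" "beq (nl N) v v'" "M = N"
    using s m e by (auto simp: sim_simp)
  have p: "PD X" "PD X'" "PD Y" "PD Y'" using s by (auto simp: sim_def)
  have b: "bnd (nl A) w" "bnd (nl N) v" "nl A = nl M" using p e by (auto simp: PD_simp)
  have "beq (nl A) (w @ v) (w1 @ v')" using a b by (intro beq_app) auto
  moreover have "PD (dprod X Y)" using PD_prod[OF p(1) p(3) m] .
  moreover have "PD (dprod X' Y')" using PD_prod[OF p(2) p(4)] m sel_sim[OF s(1), of False] sel_sim[OF s(2), of True] by simp
  ultimately show "sim (dprod X Y) (dprod X' Y')" using e a by (simp add: sim_simp)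
qed

lemma prod_caret: "PD X \<Longrightarrow> PD Y \<Longrightarrow> sel False X = sel True Y \<Longrightarrow> c < nl (fst X) \<Longrightarrow>
   dprod (caret X c) (caret Y c) = caret (dprod X Y) c"
  by (cases X; cases Y) (auto simp: PD_simp pure_def)

lemma prod_fst: "fst (dprod X Y) = fst X" by (cases X; cases Y) auto

lemma PW1: "diag_equiv Zg X \<Longrightarrow> irr Zg \<Longrightarrow> diag_equiv Zh Y \<Longrightarrow> irr Zh \<Longrightarrow> sel False X = sel True Y \<Longrightarrow>
  \<exists>X' Y'. diag_equiv Zg X' \<and> diag_equiv Zh Y' \<and> sel False X' = un (sel False Zg) (sel True Zh) \<and>
     sel True Y' = sel False X' \<and> diag_equiv (dprod X Y) (dprod X' Y')"
proof (induction "nl (fst X)" arbitrary: X Y rule: less_induct)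
  case less
  have pg: "PD Zg" "PD Zh" using less.prems by (auto simp: irr_def)
  have px: "PD X" "PD Y" using equiv_PD less.prems pg by auto
  let ?U = "un (sel False Zg) (sel True Zh)"
  have s1: "subt (sel False Zg) (sel False X)" using equiv_sub less.prems by blast
  have s2: "subt (sel True Zh) (sel False X)" using equiv_sub less.prems by metis
  have sU: "subt ?U (sel False X)" using un_least s1 s2 by blast
  show ?case
  proof (cases "sel False X = ?U")
    case True then show ?thesis by (intro exI[of _ X] exI[of _ Y]) (use less.prems True in auto)
  next
    case False
    then obtain M1 c where u: "c < nl M1" "sel False X = ex M1 c" "subt ?U M1"
      using bottom_caret sU by metis
    have u1: "subt (sel False Zg) M1" "subt (sel True Zh) M1"
      using u(3) sub_trans sub_un1 sub_un2 by blast+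
    obtain X1 where x1: "redat X X1 c" "PD X1" using G3[OF less.prems(1,2) u(2,1) u1(1)] by blast
    obtain Y1 where y1: "redat Y Y1 c" "PD Y1" using G3[OF less.prems(3,4), of True M1 c] u u1 less.prems(5) by auto
    have sx: "c < nl (fst X1)" "sim X (caret X1 c)" using redat_iff[OF px(1) x1(2)] x1 by auto
    have sy: "c < nl (fst Y1)" "sim Y (caret Y1 c)" using redat_iff[OF px(2) y1(2)] y1 by auto
    have "ex (sel False X1) c = ex M1 c" using sel_sim[OF sx(2), of False] u by simp
    then have m1: "sel False X1 = M1" using ex_inj sx(1) sel_nl[OF x1(2), of False] u(1) by metis
    have "ex (sel True Y1) c = ex M1 c" using sel_sim[OF sy(2), of True] u less.prems(5) by simp
    then have m2: "sel True Y1 = M1" using ex_inj sy(1) sel_nl[OF y1(2), of True] u(1) by metis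
    have eX: "diag_equiv Zg X1" using less.prems(1) redat_dequiv[OF x1(1) px(1) x1(2)] dequiv_trans by blast
    have eY: "diag_equiv Zh Y1" using less.prems(3) redat_dequiv[OF y1(1) px(2) y1(2)] dequiv_trans by blast
    have lt: "nl (fst X1) < nl (fst X)" using sim_nl[OF sx(2)] sx(1) by (simp add: fst_caret)
    obtain X' Y' where IH: "diag_equiv Zg X'" "diag_equiv Zh Y'" "sel False X' = ?U"
      "sel True Y' = sel False X'" "diag_equiv (dprod X1 Y1) (dprod X' Y')"
      using less.hyps[OF lt eX less.prems(2) eY less.prems(4)] m1 m2 by auto
    have "sim (dprod X Y) (dprod (caret X1 c) (caret Y1 c))"
      using prod_sim[OF sx(2) sy(2)] less.prems(5) by simp
    moreover have "dprod (caret X1 c) (caret Y1 c) = caret (dprod X1 Y1) c"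
      using prod_caret[OF x1(2) y1(2)] m1 m2 sx(1) by simp
    moreover have "diag_equiv (caret (dprod X1 Y1) c) (dprod X1 Y1)"
    proof -
      have pp: "PD (dprod X1 Y1)" using PD_prod[OF x1(2) y1(2)] m1 m2 by simp
      have "c < nl (fst (dprod X1 Y1))" using sx(1) by (simp add: prod_fst)
      then show ?thesis using red_dequiv[OF red_caret[OF pp]] dequiv_sym by blast
    qed
    ultimately have "diag_equiv (dprod X Y) (dprod X1 Y1)"
      using sim_dequiv dequiv_trans by metis
    then show ?thesis using IH dequiv_trans by blast
  qed
qed

lemma PW: "diag_equiv Zg X \<Longrightarrow> diag_equiv Zg X' \<Longrightarrow> irr Zg \<Longrightarrow> diag_equiv Zh Y \<Longrightarrow> diag_equiv Zh Y' \<Longrightarrow> irr Zh \<Longrightarrow>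
  sel False X = sel True Y \<Longrightarrow> sel False X' = sel True Y' \<Longrightarrow> diag_equiv (dprod X Y) (dprod X' Y')"
proof -
  assume a: "diag_equiv Zg X" "diag_equiv Zg X'" "irr Zg" "diag_equiv Zh Y" "diag_equiv Zh Y'" "irr Zh"
    "sel False X = sel True Y" "sel False X' = sel True Y'"
  obtain X1 Y1 where 1: "diag_equiv Zg X1" "diag_equiv Zh Y1" "sel False X1 = un (sel False Zg) (sel True Zh)"
     "sel True Y1 = sel False X1" "diag_equiv (dprod X Y) (dprod X1 Y1)"
    using PW1[OF a(1,3,4,6,7)] by blast
  obtain X2 Y2 where 2: "diag_equiv Zg X2" "diag_equiv Zh Y2" "sel False X2 = un (sel False Zg) (sel True Zh)"
     "sel True Y2 = sel False X2" "diag_equiv (dprod X' Y') (dprod X2 Y2)"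
    using PW1[OF a(2,3,5,6,8)] by blast
  have "sim X1 X2" using UE[OF 1(1) 2(1) a(3), of False] 1 2 by simp
  moreover have "sim Y1 Y2" using UE[OF 1(2) 2(2) a(6), of True] 1 2 by simp
  ultimately have "sim (dprod X1 Y1) (dprod X2 Y2)" using prod_sim 1 by simp
  then show ?thesis using 1 2 sim_dequiv dequiv_trans dequiv_sym by metis
qed

fun grafti :: "tree \<Rightarrow> nat \<Rightarrow> tree \<Rightarrow> tree" where
  "grafti Leaf i K = (if i = 0 then K else Leaf)"
| "grafti (Node l r) i K = (if i < nl l then Node (grafti l i K) r else Node l (grafti r (i - nl l) K))"

lemma graft_grafti: "i < nl t \<Longrightarrow> graft t (leaves t ! i) K = grafti t i K"
proof (induction t arbitrary: i)
  case Leaf then show ?case by simp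
next
  case (Node l r)
  have "leaves (Node l r) ! i = (if i < nl l then False # (leaves l ! i) else True # (leaves r ! (i - nl l)))"
    using Node.prems by (intro leaves_Node_nth) simp
  then show ?case using Node by (simp del: leaves.simps)
qed

lemma nl_grafti[simp]: "i < nl t \<Longrightarrow> nl (grafti t i K) = nl t + nl K - 1"
  by (induction t arbitrary: i) (auto simp: nl_ge1)

lemma grafti_Leaf[simp]: "grafti t i Leaf = t"
  by (induction t arbitrary: i) auto

lemma grafti_ex_inner: "i < nl t \<Longrightarrow> c < nl K \<Longrightarrow> grafti t i (ex K c) = ex (grafti t i K) (i + c)"
proof (induction t arbitrary: i)
  case Leaf then show ?case by simp
next
  case (Node l r)
  show ?case
  proof (cases "i < nl l")
    case True
    then have "i + c < nl l + nl K - 1" using Node.prems by linarith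
    then show ?thesis using True Node by simp
  next
    case False
    then show ?thesis using Node by (simp add: add.commute)
  qed
qed

lemma grafti_ex_left: "c < i1 \<Longrightarrow> i1 < nl t \<Longrightarrow> grafti (ex t c) (Suc i1) K = ex (grafti t i1 K) c"
proof (induction t arbitrary: i1 c)
  case Leaf then show ?case by simp
next
  case (Node l r)
  consider "i1 < nl l" | "c < nl l" "\<not> i1 < nl l" | "\<not> c < nl l" by linarith
  then show ?case
  proof cases
    case 1
    then have "c < nl l + nl K - 1" using Node.prems nl_ge1[of K] by linarith
    then show ?thesis using Node 1 by simp
  next
    case 2 then show ?thesis using Node nl_ge1[of K] by (simp add: Suc_diff_le)
  next
    case 3 then show ?thesis using Node by (simp add: Suc_diff_le)
  qed
qed

lemma grafti_ex_right: "i < c \<Longrightarrow> c < nl t \<Longrightarrow> grafti (ex t c) i K = ex (grafti t i K) (c + nl K - 1)"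
proof (induction t arbitrary: i c)
  case Leaf then show ?case by simp
next
  case (Node l r)
  consider "c < nl l" | "i < nl l" "\<not> c < nl l" | "\<not> i < nl l" by linarith
  then show ?case
  proof cases
    case 1
    then have "c + nl K - 1 < nl l + nl K - 1" using Node.prems nl_ge1[of K] by linarith
    then show ?thesis using Node 1 by simp
  next
    case 2
    then have "\<not> c + nl K - 1 < nl l + nl K - 1" "c + nl K - 1 - (nl l + nl K - 1) = c - nl l"
      using nl_ge1[of K] by linarith+
    then show ?thesis using Node 2 by simp
  next
    case 3
    have cc: "c < nl l + nl r" using Node.prems by simp
    from 3 have "\<not> c + nl K - 1 < nl l" "c + nl K - 1 - nl l = c - nl l + nl K - 1" "\<not> c < nl l"
      "i - nl l < c - nl l" "c - nl l < nl r"
      using nl_ge1[of K] Node.prems cc by linarith+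
    then show ?thesis using Node.IH(2)[of "i - nl l" "c - nl l"] 3 by simp
  qed
qed


lemma grafti_nonLeaf: "i < nl t \<Longrightarrow> grafti t i K = Leaf \<longleftrightarrow> (t = Leaf \<and> K = Leaf)"
  by (cases t) auto

lemma grafti_class: "2 \<le> nl K \<Longrightarrow> i < nl t \<Longrightarrow> c < nl U \<Longrightarrow> grafti t i K = ex U c \<Longrightarrow>
  (i \<le> c \<and> c + 1 < i + nl K \<and> (\<exists>K1. K = ex K1 (c - i) \<and> U = grafti t i K1 \<and> c - i < nl K1)) \<or>
  (c + 1 < i \<and> (\<exists>t1. t = ex t1 c \<and> c < nl t1 \<and> U = grafti t1 (i - 1) K)) \<or>
  (i + nl K \<le> c \<and> (\<exists>t1. t = ex t1 (c + 1 - nl K) \<and> c + 1 - nl K < nl t1 \<and> U = grafti t1 i K))"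
proof (induction t arbitrary: i U c)
  case Leaf
  then have "i = 0" "K = ex U c" by auto
  then show ?case using Leaf by (intro disjI1) (auto intro!: exI[of _ U])
next
  case (Node l r)
  have KL: "K \<noteq> Leaf" using Node.prems(1) by auto
  obtain ul ur where U: "U = Node ul ur"
  proof (cases U)
    case Leaf
    then have "grafti (Node l r) i K = Node Leaf Leaf" using Node.prems by auto
    then show ?thesis using KL Node.prems(2) by (auto split: if_splits simp: grafti_nonLeaf)
  qed
  have nK: "1 \<le> nl K" by (rule nl_ge1)
  consider "i < nl l" "c < nl ul" | "i < nl l" "\<not> c < nl ul" | "\<not> i < nl l" "c < nl ul" | "\<not> i < nl l" "\<not> c < nl ul"
    by blast
  then show ?case
  proof cases
    case 1
    then have e: "grafti l i K = ex ul c" "r = ur" using Node.prems U by auto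
    have IH: "(i \<le> c \<and> c + 1 < i + nl K \<and> (\<exists>K1. K = ex K1 (c - i) \<and> ul = grafti l i K1 \<and> c - i < nl K1)) \<or>
      (c + 1 < i \<and> (\<exists>t1. l = ex t1 c \<and> c < nl t1 \<and> ul = grafti t1 (i - 1) K)) \<or>
      (i + nl K \<le> c \<and> (\<exists>t1. l = ex t1 (c + 1 - nl K) \<and> c + 1 - nl K < nl t1 \<and> ul = grafti t1 i K))"
      using Node.IH(1)[OF Node.prems(1) 1(1) 1(2) e(1)] .
    then show ?thesis
    proof (elim disjE conjE exE)
      fix K1 assume a: "i \<le> c" "c + 1 < i + nl K" "K = ex K1 (c - i)" "ul = grafti l i K1" "c - i < nl K1"
      show ?thesis using a 1 U e by (intro disjI1) auto
    next
      fix t1 assume a: "c + 1 < i" "l = ex t1 c" "c < nl t1" "ul = grafti t1 (i - 1) K"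
      have "i - 1 < nl t1" using 1 a by simp
      then show ?thesis using a 1 U e by (intro disjI2 disjI1) (auto intro!: exI[of _ "Node t1 r"])
    next
      fix t1 assume a: "i + nl K \<le> c" "l = ex t1 (c + 1 - nl K)" "c + 1 - nl K < nl t1" "ul = grafti t1 i K"
      have "i < nl t1" using a nK by linarith
      then show ?thesis using a 1 U e by (intro disjI2 disjI2) (auto intro!: exI[of _ "Node t1 r"])
    qed
  next
    case 2
    then have e: "grafti l i K = ul" "r = ex ur (c - nl ul)" using Node.prems U by auto
    have nu: "nl ul = nl l + nl K - 1" using e 2 by auto
    have c1: "i + nl K \<le> c" using nu 2 nK by linarith
    have c2: "\<not> c + 1 - nl K < nl l" "c + 1 - nl K - nl l = c - nl ul" using nu 2 nK by linarith+
    have c3: "c - nl ul < nl ur" using Node.prems(3) U 2 by simp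
    have t: "Node l r = ex (Node l ur) (c + 1 - nl K)" using c2 e by simp
    have u: "U = grafti (Node l ur) i K" using e 2 U by simp
    have b: "c + 1 - nl K < nl (Node l ur)" using c2 c3 by simp
    show ?thesis using c1 t u b by blast
  next
    case 3
    then have e: "l = ex ul c" "grafti r (i - nl l) K = ur" using Node.prems U by auto
    have nu: "nl l = Suc (nl ul)" using e 3 by simp
    have c1: "c + 1 < i" using nu 3 by linarith
    have c2: "\<not> i - 1 < nl ul" "i - 1 - nl ul = i - nl l" using nu 3 by linarith+
    show ?thesis using c1 c2 e 3 U
      by (intro disjI2 disjI1) (auto intro!: exI[of _ "Node ul r"])
  next
    case 4
    have h1: "grafti (Node l r) i K = Node l (grafti r (i - nl l) K)" using 4 by simp
    have h2: "ex U c = Node ul (ex ur (c - nl ul))" using U 4 by simp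
    have "Node l (grafti r (i - nl l) K) = Node ul (ex ur (c - nl ul))" using Node.prems(4) unfolding h1 h2 .
    then have "l = ul \<and> grafti r (i - nl l) K = ex ur (c - nl ul)" by (rule tree.inject[THEN iffD1])
    then have e0: "l = ul" and e1: "grafti r (i - nl l) K = ex ur (c - nl ul)" by blast+
    have nle: "nl ul = nl l" using e0 by simp
    have e: "grafti r (i - nl l) K = ex ur (c - nl l)" using e1 nle by simp
    have b: "i - nl l < nl r" "c - nl l < nl ur" using Node.prems(2,3) U 4 nle by simp_all
    have IH: "(i - nl l \<le> c - nl l \<and> c - nl l + 1 < i - nl l + nl K \<and>
         (\<exists>K1. K = ex K1 (c - nl l - (i - nl l)) \<and> ur = grafti r (i - nl l) K1 \<and> c - nl l - (i - nl l) < nl K1)) \<or>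
      (c - nl l + 1 < i - nl l \<and> (\<exists>t1. r = ex t1 (c - nl l) \<and> c - nl l < nl t1 \<and> ur = grafti t1 (i - nl l - 1) K)) \<or>
      (i - nl l + nl K \<le> c - nl l \<and> (\<exists>t1. r = ex t1 (c - nl l + 1 - nl K) \<and> c - nl l + 1 - nl K < nl t1 \<and> ur = grafti t1 (i - nl l) K))"
      using Node.IH(2)[OF Node.prems(1) b e] .
    then show ?thesis
    proof (elim disjE conjE exE)
      fix K1 assume a: "i - nl l \<le> c - nl l" "c - nl l + 1 < i - nl l + nl K" "K = ex K1 (c - nl l - (i - nl l))"
        "ur = grafti r (i - nl l) K1" "c - nl l - (i - nl l) < nl K1"
      have x: "c - nl l - (i - nl l) = c - i" "i \<le> c" "c + 1 < i + nl K" using 4 a nle by linarith+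
      have u: "U = grafti (Node l r) i K1" using U e0 a(4) 4 by simp
      have k: "K = ex K1 (c - i)" "c - i < nl K1" using x(1) a(3,5) by simp_all
      show ?thesis using u k x(2,3) by blast
    next
      fix t1 assume a: "c - nl l + 1 < i - nl l" "r = ex t1 (c - nl l)" "c - nl l < nl t1" "ur = grafti t1 (i - nl l - 1) K"
      have c0: "\<not> c < nl l" using 4 nle by simp
      have x: "c + 1 < i" "\<not> i - 1 < nl l" "i - 1 - nl l = i - nl l - 1" "c < nl l + nl t1" using 4 a nle by linarith+
      have t: "Node l r = ex (Node l t1) c" using c0 a(2) by simp
      have b: "c < nl (Node l t1)" using x(4) by simp
      have g: "grafti (Node l t1) (i - 1) K = Node l (grafti t1 (i - 1 - nl l) K)" using x(2) by simp
      have "U = Node l (grafti t1 (i - nl l - 1) K)" using U e0 a(4) by simp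
      also have "\<dots> = grafti (Node l t1) (i - 1) K" unfolding g x(3) ..
      finally have u: "U = grafti (Node l t1) (i - 1) K" .
      show ?thesis using t b u x(1) by blast
    next
      fix t1 assume a: "i - nl l + nl K \<le> c - nl l" "r = ex t1 (c - nl l + 1 - nl K)" "c - nl l + 1 - nl K < nl t1"
        "ur = grafti t1 (i - nl l) K"
      have x: "i + nl K \<le> c" "\<not> c + 1 - nl K < nl l" "c + 1 - nl K - nl l = c - nl l + 1 - nl K"
        "c + 1 - nl K < nl l + nl t1" using 4 a nK nle by linarith+
      have t0: "ex (Node l t1) (c + 1 - nl K) = Node l (ex t1 (c + 1 - nl K - nl l))" using x(2) by simp
      have t: "Node l r = ex (Node l t1) (c + 1 - nl K)" unfolding t0 x(3) a(2) ..
      have b: "c + 1 - nl K < nl (Node l t1)" using x(4) by simp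
      have g: "grafti (Node l t1) i K = Node l (grafti t1 (i - nl l) K)" using 4 by simp
      have u: "U = grafti (Node l t1) i K" unfolding g using U e0 a(4) by simp
      show ?thesis using t b u x(1) by blast
    qed
  qed
qed

lemma LN: "i < nl l + nl r \<Longrightarrow> leaves (Node l r) ! i =
   (if i < nl l then False # (leaves l ! i) else True # (leaves r ! (i - nl l)))"
  by (rule leaves_Node_nth)

lemma leaves_ex_lt: "j < c \<Longrightarrow> c < nl S \<Longrightarrow> leaves (ex S c) ! j = leaves S ! j"
proof (induction S arbitrary: j c)
  case Leaf then show ?case by simp
next
  case (Node l r)
  show ?case
  proof (cases "c < nl l")
    case True
    then show ?thesis using Node by (simp add: LN del: leaves.simps)
  next
    case False
    then show ?thesis using Node by (simp add: LN del: leaves.simps)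
  qed
qed

lemma leaves_ex_gt: "c < j \<Longrightarrow> j < nl S \<Longrightarrow> leaves (ex S c) ! Suc j = leaves S ! j"
proof (induction S arbitrary: j c)
  case Leaf then show ?case by simp
next
  case (Node l r)
  show ?case
  proof (cases "c < nl l")
    case True
    then show ?thesis using Node by (simp add: LN Suc_diff_le del: leaves.simps)
  next
    case False
    then show ?thesis using Node by (simp add: LN Suc_diff_le del: leaves.simps)
  qed
qed

lemma leaves_ex_c: "c < nl S \<Longrightarrow> leaves (ex S c) ! c = leaves S ! c @ [False]"
proof (induction S arbitrary: c)
  case Leaf then show ?case by simp
next
  case (Node l r)
  then show ?case by (simp add: LN del: leaves.simps)
qed

lemma leaves_ex_Suc_c: "c < nl S \<Longrightarrow> leaves (ex S c) ! Suc c = leaves S ! c @ [True]"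
proof (induction S arbitrary: c)
  case Leaf then show ?case by simp
next
  case (Node l r)
  show ?case
  proof (cases "c < nl l")
    case True
    then show ?thesis using Node by (simp add: LN del: leaves.simps)
  next
    case False
    then show ?thesis using Node by (simp add: LN Suc_diff_le del: leaves.simps)
  qed
qed

lemma distinct_leaves: "distinct (leaves S)"
  by (induction S) (auto simp: distinct_map inj_on_def)

lemma leaves_nth_inj: "i < nl S \<Longrightarrow> j < nl S \<Longrightarrow> leaves S ! i = leaves S ! j \<Longrightarrow> i = j"
  using distinct_leaves[of S] by (simp add: nth_eq_iff_index_eq num_leaves_def)

lemma leaf_prefix: "subt T0 U \<Longrightarrow> j0 < nl T0 \<Longrightarrow> a < nl U \<Longrightarrow> leaves T0 ! j0 = leaves U ! a @ x \<Longrightarrow> x = []"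
proof (induction T0 U arbitrary: j0 a rule: subt.induct)
  case (1 t)
  then show ?case by simp
next
  case (2 l r) then show ?case by simp
next
  case (3 l r l' r')
  have e: "leaves (Node l r) ! j0 = (if j0 < nl l then False # (leaves l ! j0) else True # (leaves r ! (j0 - nl l)))"
    using 3 by (intro LN) simp
  have e': "leaves (Node l' r') ! a = (if a < nl l' then False # (leaves l' ! a) else True # (leaves r' ! (a - nl l')))"
    using 3 by (intro LN) simp
  show ?case
  proof (cases "j0 < nl l")
    case True
    then have aa: "a < nl l'" using 3 e e' by (auto split: if_splits)
    have "leaves l ! j0 = leaves l' ! a @ x" using 3(6) e e' True aa by simp
    moreover have "subt l l'" using 3(3) by simp
    ultimately show ?thesis using 3(1)[OF _ True aa] by simp
  next
    case False
    then have aa: "\<not> a < nl l'" using 3 e e' by (auto split: if_splits)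
    have b: "j0 - nl l < nl r" "a - nl l' < nl r'" using 3(4,5) False aa by simp_all
    have "leaves r ! (j0 - nl l) = leaves r' ! (a - nl l') @ x" using 3(6) e e' False aa by simp
    moreover have "subt r r'" using 3(3) by simp
    ultimately show ?thesis using 3(2)[OF _ b] by simp
  qed
qed

lemma bottom_caret_leaf: "subt T0 U \<Longrightarrow> T0 \<noteq> U \<Longrightarrow> j0 < nl T0 \<Longrightarrow> jU < nl U \<Longrightarrow> leaves T0 ! j0 = leaves U ! jU \<Longrightarrow>
  \<exists>U1 c j1. c < nl U1 \<and> U = ex U1 c \<and> subt T0 U1 \<and> j1 < nl U1 \<and> j1 \<noteq> c \<and> leaves U1 ! j1 = leaves U ! jU \<and>
     jU = (if c < j1 then Suc j1 else j1)"
proof -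
  assume a: "subt T0 U" "T0 \<noteq> U" "j0 < nl T0" "jU < nl U" "leaves T0 ! j0 = leaves U ! jU"
  obtain U1 c where u: "c < nl U1" "U = ex U1 c" "subt T0 U1" using bottom_caret a by metis
  have n: "nl U = Suc (nl U1)" using u by simp
  consider "jU < c" | "jU = c" | "jU = Suc c" | "Suc c < jU" by linarith
  then show ?thesis
  proof cases
    case 1
    then show ?thesis using u leaves_ex_lt[OF 1 u(1)] by (intro exI[of _ U1] exI[of _ c] exI[of _ jU]) auto
  next
    case 2
    then have "leaves T0 ! j0 = leaves U1 ! c @ [False]" using a u leaves_ex_c by simp
    then show ?thesis using leaf_prefix[OF u(3) a(3) u(1)] by blast
  next
    case 3
    then have "leaves T0 ! j0 = leaves U1 ! c @ [True]" using a u leaves_ex_Suc_c by simp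
    then show ?thesis using leaf_prefix[OF u(3) a(3) u(1)] by blast
  next
    case 4
    then obtain j1 where j1: "jU = Suc j1" "c < j1" by (cases jU) auto
    then have "j1 < nl U1" using a(4) n by simp
    then show ?thesis using u j1 leaves_ex_gt[OF j1(2)]
      by (intro exI[of _ U1] exI[of _ c] exI[of _ j1]) auto
  qed
qed

lemma un_leaf: "j1 < nl T1 \<Longrightarrow> j2 < nl T2 \<Longrightarrow> leaves T1 ! j1 = leaves T2 ! j2 \<Longrightarrow>
  \<exists>j. j < nl (un T1 T2) \<and> leaves (un T1 T2) ! j = leaves T1 ! j1"
proof (induction T1 T2 arbitrary: j1 j2 rule: un.induct)
  case (1 t)
  then show ?case by (intro exI[of _ j2]) auto
next
  case (2 a b)
  then show ?case by (intro exI[of _ j1]) auto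
next
  case (3 a b c d)
  have e: "leaves (Node a b) ! j1 = (if j1 < nl a then False # (leaves a ! j1) else True # (leaves b ! (j1 - nl a)))"
    using 3 by (intro LN) simp
  have e': "leaves (Node c d) ! j2 = (if j2 < nl c then False # (leaves c ! j2) else True # (leaves d ! (j2 - nl c)))"
    using 3 by (intro LN) simp
  show ?case
  proof (cases "j1 < nl a")
    case True
    then have j2: "j2 < nl c" using 3 e e' by (auto split: if_splits)
    then obtain j where j: "j < nl (un a c)" "leaves (un a c) ! j = leaves a ! j1"
      using 3(1)[of j1 j2] True e e' 3(5) by auto
    have "leaves (Node (un a c) (un b d)) ! j = False # leaves (un a c) ! j"
      using j by (subst LN) auto
    then show ?thesis using j e True by (intro exI[of _ j]) auto
  next
    case False
    then have j2: "\<not> j2 < nl c" using 3 e e' by (auto split: if_splits)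
    have b: "j1 - nl a < nl b" "j2 - nl c < nl d" using 3(3,4) False j2 by simp_all
    have "leaves b ! (j1 - nl a) = leaves d ! (j2 - nl c)" using 3(5) e e' False j2 by simp
    then obtain j where j: "j < nl (un b d)" "leaves (un b d) ! j = leaves b ! (j1 - nl a)"
      using 3(2)[OF b] by blast
    have nu: "nl (un a c) \<le> nl (un a c)" by simp
    have "leaves (Node (un a c) (un b d)) ! (nl (un a c) + j) = True # leaves (un b d) ! j"
      using j by (subst LN) auto
    then show ?thesis using j e False by (intro exI[of _ "nl (un a c) + j"]) auto
  qed
qed

lemma grafti_ex_any: "c < nl U1 \<Longrightarrow> j1 < nl U1 \<Longrightarrow> j1 \<noteq> c \<Longrightarrow>
  grafti (ex U1 c) (if c < j1 then Suc j1 else j1) K = ex (grafti U1 j1 K) (if c < j1 then c else c + nl K - 1)"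
  by (auto simp: grafti_ex_left grafti_ex_right)

lemma caret_equiv: "PD X \<Longrightarrow> i < nl (fst X) \<Longrightarrow> diag_equiv X (caret X i)"
proof (cases X)
  fix S w T assume a: "PD X" "i < nl (fst X)" "X = (S, w, T)"
  then have "dstep (S, w, T) (caret (S, w, T) i)" by (intro caret_dstep) auto
  then show ?thesis using a dstep_dequiv by simp
qed

lemma LIFT: "subt T0 U \<Longrightarrow> j0 < nl T0 \<Longrightarrow> jU < nl U \<Longrightarrow> leaves T0 ! j0 = leaves U ! jU \<Longrightarrow> nl P = nl Q \<Longrightarrow>
  PD (A, w, grafti T0 j0 P) \<Longrightarrow>
  \<exists>A' w'. diag_equiv (A, w, grafti T0 j0 P) (A', w', grafti U jU P) \<and>
          diag_equiv (A, w, grafti T0 j0 Q) (A', w', grafti U jU Q)"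
proof (induction "nl U" arbitrary: U jU rule: less_induct)
  case less
  show ?case
  proof (cases "U = T0")
    case True
    then have "jU = j0" using leaves_nth_inj[of jU U j0] less.prems by simp
    then show ?thesis using True by (intro exI[of _ A] exI[of _ w]) auto
  next
    case False
    obtain U1 c j1 where u: "c < nl U1" "U = ex U1 c" "subt T0 U1" "j1 < nl U1" "j1 \<noteq> c"
      "leaves U1 ! j1 = leaves U ! jU" "jU = (if c < j1 then Suc j1 else j1)"
      using bottom_caret_leaf[OF less.prems(1) False[symmetric] less.prems(2,3,4)] by blast
    have lt: "nl U1 < nl U" using u by simp
    obtain A1 w1 where IH: "diag_equiv (A, w, grafti T0 j0 P) (A1, w1, grafti U1 j1 P)"
        "diag_equiv (A, w, grafti T0 j0 Q) (A1, w1, grafti U1 j1 Q)"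
      using less.hyps[OF lt u(3) less.prems(2) u(4) _ less.prems(5,6)] u(6) less.prems(4) by auto
    define c' where "c' = (if c < j1 then c else c + nl P - 1)"
    have gP: "grafti U jU P = ex (grafti U1 j1 P) c'" using grafti_ex_any[OF u(1,4,5)] u c'_def by simp
    have gQ: "grafti U jU Q = ex (grafti U1 j1 Q) c'" using grafti_ex_any[OF u(1,4,5), of Q] u c'_def less.prems(5) by simp
    have p1: "PD (A1, w1, grafti U1 j1 P)" using equiv_PD[OF IH(1) less.prems(6)] .
    have eqn: "nl (grafti U1 j1 Q) = nl (grafti U1 j1 P)" using u less.prems(5) by simp
    have p2: "PD (A1, w1, grafti U1 j1 Q)" unfolding PD_simp eqn using p1[unfolded PD_simp] .
    have cl: "c' < nl A1" using p1 u by (auto simp: PD_simp c'_def nl_ge1)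
    have e1: "diag_equiv (A1, w1, grafti U1 j1 P) (ex A1 c', cable c' w1, grafti U jU P)"
      using caret_equiv[OF p1, of c'] cl gP by simp
    have e2: "diag_equiv (A1, w1, grafti U1 j1 Q) (ex A1 c', cable c' w1, grafti U jU Q)"
      using caret_equiv[OF p2, of c'] cl gQ by simp
    show ?thesis using IH e1 e2 dequiv_trans by blast
  qed
qed

lemma LIFTF: "subt T0 U \<Longrightarrow> j0 < nl T0 \<Longrightarrow> jU < nl U \<Longrightarrow> leaves T0 ! j0 = leaves U ! jU \<Longrightarrow> nl P = nl Q \<Longrightarrow>
  diag_equiv (grafti T0 j0 P, [], grafti T0 j0 Q) (grafti U jU P, [], grafti U jU Q)"
proof (induction "nl U" arbitrary: U jU rule: less_induct)
  case less
  show ?case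
  proof (cases "U = T0")
    case True
    then have "jU = j0" using leaves_nth_inj[of jU U j0] less.prems by simp
    then show ?thesis using True by auto
  next
    case False
    obtain U1 c j1 where u: "c < nl U1" "U = ex U1 c" "subt T0 U1" "j1 < nl U1" "j1 \<noteq> c"
      "leaves U1 ! j1 = leaves U ! jU" "jU = (if c < j1 then Suc j1 else j1)"
      using bottom_caret_leaf[OF less.prems(1) False[symmetric] less.prems(2,3,4)] by blast
    have lt: "nl U1 < nl U" using u by simp
    have IH: "diag_equiv (grafti T0 j0 P, [], grafti T0 j0 Q) (grafti U1 j1 P, [], grafti U1 j1 Q)"
      using less.hyps[OF lt u(3) less.prems(2) u(4)] u less.prems by auto
    define c' where "c' = (if c < j1 then c else c + nl P - 1)"
    have gP: "grafti U jU P = ex (grafti U1 j1 P) c'" using grafti_ex_any[OF u(1,4,5)] u c'_def by simp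
    have gQ: "grafti U jU Q = ex (grafti U1 j1 Q) c'" using grafti_ex_any[OF u(1,4,5), of Q] u c'_def less.prems(5) by simp
    have p1: "PD (grafti U1 j1 P, [], grafti U1 j1 Q)" using less.prems(5) u by (simp add: PD_simp pure_def)
    have cl: "c' < nl (grafti U1 j1 P)" using u by (auto simp: c'_def nl_ge1)
    have "diag_equiv (grafti U1 j1 P, [], grafti U1 j1 Q) (grafti U jU P, cable c' [], grafti U jU Q)"
      using caret_equiv[OF p1, of c'] cl gP gQ by simp
    then show ?thesis using IH dequiv_trans by simp
  qed
qed

lemma L3: "red\<^sup>*\<^sup>* (P, w, Q) Y \<Longrightarrow> beq (nl P) w [] \<Longrightarrow> PD (P, w, Q) \<Longrightarrow> j < nl T \<Longrightarrow>
  diag_equiv (grafti T j P, [], grafti T j Q) (grafti T j (fst Y), [], grafti T j (snd (snd Y))) \<and>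
  beq (nl (fst Y)) (fst (snd Y)) []"
proof (induction rule: rtranclp_induct)
  case base then show ?case by simp
next
  case (step Y Z)
  then have IH: "diag_equiv (grafti T j P, [], grafti T j Q) (grafti T j (fst Y), [], grafti T j (snd (snd Y)))"
    "beq (nl (fst Y)) (fst (snd Y)) []" by auto
  obtain c where r: "redat Y Z c" "PD Y" "PD Z" using step(2) by (auto simp: red_def)
  obtain P1 w1 Q1 where Y: "Y = (P1, w1, Q1)" by (cases Y)
  obtain P2 w2 Q2 where Z: "Z = (P2, w2, Q2)" by (cases Z)
  have rr: "c < nl P2" "P1 = ex P2 c" "Q1 = ex Q2 c" "beq (nl P1) w1 (cable c w2)"
    using r(1)[unfolded Y Z redat_simp] by auto
  have pz: "nl P2 = nl Q2" "bnd (nl P2) w2" using r(3) Z by (auto simp: PD_simp)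
  have "beq (nl P2) (del (Suc c) (cable c w2)) (del (Suc c) [])"
    using IH(2) rr Y by (intro del_beq) (auto intro: beq_trans beq_sym)
  then have b: "beq (nl P2) w2 []" by (simp add: del_cable_Suc)
  have p1: "PD (grafti T j P2, [], grafti T j Q2)" using pz step.prems by (simp add: PD_simp pure_def)
  have cl: "j + c < nl (grafti T j P2)" using step.prems rr by simp
  have "diag_equiv (grafti T j P2, [], grafti T j Q2) (ex (grafti T j P2) (j + c), cable (j + c) [], ex (grafti T j Q2) (j + c))"
    using caret_equiv[OF p1 ] cl by simp
  then have "diag_equiv (grafti T j P2, [], grafti T j Q2) (grafti T j P1, [], grafti T j Q1)"
    using rr pz step.prems by (simp add: grafti_ex_inner)
  then have e3: "diag_equiv (grafti T j P1, [], grafti T j Q1) (grafti T j P2, [], grafti T j Q2)"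
    by (rule dequiv_sym)
  have e0: "diag_equiv (grafti T j P, [], grafti T j Q) (grafti T j P1, [], grafti T j Q1)"
    using IH(1) Y by simp
  have "diag_equiv (grafti T j P, [], grafti T j Q) (grafti T j P2, [], grafti T j Q2)"
    using dequiv_trans[OF e0 e3] .
  then show ?case using b Z by simp
qed

inductive RE :: "diag \<Rightarrow> nat \<Rightarrow> nat \<Rightarrow> diag \<Rightarrow> bool" where
  RE0: "RE Z i 0 Z"
| RES: "RE Z i t W \<Longrightarrow> i \<le> j \<Longrightarrow> j \<le> i + t \<Longrightarrow> RE Z i (Suc t) (caret W j)"

lemma RE_props: "RE Z i t W \<Longrightarrow> PD Z \<Longrightarrow> i < nl (fst Z) \<Longrightarrow>
  PD W \<and> nl (fst W) = nl (fst Z) + t \<and> diag_equiv Z W"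
proof (induction rule: RE.induct)
  case (RE0 Z i) then show ?case by simp
next
  case (RES Z i t W j)
  then have IH: "PD W" "nl (fst W) = nl (fst Z) + t" "diag_equiv Z W" by auto
  have jl: "j < nl (fst W)" using IH RES by linarith
  have "PD (caret W j)" using caret_PD[OF IH(1) jl] .
  moreover have "nl (fst (caret W j)) = nl (fst Z) + Suc t" using IH jl by (simp add: fst_caret)
  moreover have "diag_equiv Z (caret W j)" using IH caret_equiv[OF IH(1) jl] dequiv_trans by blast
  ultimately show ?case by blast
qed

lemma RE_outside: "RE Z i t W \<Longrightarrow> PD Z \<Longrightarrow> i < nl (fst Z) \<Longrightarrow> redat W Y c \<Longrightarrow> PD Y \<Longrightarrow>
  c + 1 < i \<or> i + t < c \<Longrightarrow> \<exists>Y'. redat Z Y' (if c < i then c else c - t) \<and> PD Y'"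
proof (induction arbitrary: Y c rule: RE.induct)
  case (RE0 Z i) then show ?case by (intro exI[of _ Y]) simp
next
  case (RES Z i t W j)
  have P: "PD W" "nl (fst W) = nl (fst Z) + t" using RE_props[OF RES.hyps(1) RES.prems(1,2)] by auto
  have jl: "j < nl (fst W)" using P RES by linarith
  have pc: "PD (caret W j)" using caret_PD[OF P(1) jl] .
  have rW: "redat (caret W j) W j" using redat_iff[OF pc P(1)] jl sim_refl[OF pc] by simp
  consider "c < j" | "j < c" | "c = j" by linarith
  then show ?case
  proof cases
    case 1
    then have ci: "c + 1 < i" using RES by linarith
    obtain Z1 Z2 where z: "redat Y Z1 (j - 1)" "redat W Z2 c" "sim Z1 Z2"
      using LC_diff[OF RES.prems(3) rW 1 pc RES.prems(4) P(1)] by blast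
    have "PD Z2" using z(3) by (simp add: sim_def)
    then show ?thesis using RES.IH[OF RES.prems(1,2) z(2)] ci by auto
  next
    case 2
    then have ci: "i + t < c - 1" "\<not> c < i" "\<not> c - 1 < i" "c - 1 - t = c - Suc t" using RES by linarith+
    obtain Z1 Z2 where z: "redat W Z1 (c - 1)" "redat Y Z2 j" "sim Z1 Z2"
      using LC_diff[OF rW RES.prems(3) 2 pc P(1) RES.prems(4)] by blast
    have "PD Z1" using z(3) by (simp add: sim_def)
    then show ?thesis using RES.IH[OF RES.prems(1,2) z(1)] ci by auto
  next
    case 3 then show ?thesis using RES by linarith
  qed
qed

lemma RE_exists: "PD (S, w, T) \<Longrightarrow> i < nl S \<Longrightarrow>
  \<exists>W. RE (S, w, T) i (nl K - 1) W \<and> fst W = grafti S i K \<and> snd (snd W) = grafti T i K"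
proof (induction "nl K" arbitrary: K rule: less_induct)
  case less
  show ?case
  proof (cases "K = Leaf")
    case True
    then show ?thesis by (intro exI[of _ "(S, w, T)"]) (auto intro: RE0)
  next
    case False
    then obtain K1 c where k: "c < nl K1" "K = ex K1 c" using nonleaf_ex by blast
    have lt: "nl K1 < nl K" using k by simp
    obtain W1 where w1: "RE (S, w, T) i (nl K1 - 1) W1" "fst W1 = grafti S i K1" "snd (snd W1) = grafti T i K1"
      using less.hyps[OF lt less.prems] by blast
    have nT: "i < nl T" using less.prems by (simp add: PD_simp)
    have r: "RE (S, w, T) i (Suc (nl K1 - 1)) (caret W1 (i + c))"
      using w1(1) k by (intro RES) auto
    have eqn: "nl K - 1 = Suc (nl K1 - 1)" using k nl_ge1[of K1] by simp
    have "RE (S, w, T) i (nl K - 1) (caret W1 (i + c))" unfolding eqn by (rule r)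
    moreover have "fst (caret W1 (i + c)) = grafti S i K" using w1 k less.prems grafti_ex_inner
      by (simp add: fst_caret)
    moreover have "snd (snd (caret W1 (i + c))) = grafti T i K"
      using w1 k nT grafti_ex_inner by (cases W1) auto
    ultimately show ?thesis by blast
  qed
qed

lemma RE_zero: "RE Z i 0 W \<Longrightarrow> W = Z"
  by (cases rule: RE.cases) auto

lemma reds_dequiv: "red\<^sup>*\<^sup>* X Y \<Longrightarrow> diag_equiv X Y"
proof (induction rule: rtranclp_induct)
  case base then show ?case by simp
next
  case (step y z)
  then show ?case using red_dequiv[OF step(2)] dequiv_sym dequiv_trans by blast
qed

lemma irr_redE: "irr X \<Longrightarrow> redat X Y c \<Longrightarrow> PD Y \<Longrightarrow> False"
  unfolding irr_def red_def by blast

lemma D0_irr: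
  assumes g: "irr (Tp, \<sigma>, Tm)" and k: "irr (Kp, [], Km)" and nK: "nl Kp = nl Km"
    and re: "RE (Tp, \<sigma>, Tm) i (nl Kp - 1) W" and w1: "fst W = grafti Tp i Kp" and w2: "snd (snd W) = grafti Tm i Kp"
    and i: "i < nl Tp"
  shows "irr (grafti Tp i Kp, fst (snd W), grafti Tm i Km)"
proof -
  have pg: "PD (Tp, \<sigma>, Tm)" using g by (simp add: irr_def)
  have iT: "i < nl Tm" using pg i by (simp add: PD_simp)
  have i': "i < nl (fst (Tp, \<sigma>, Tm))" using i by simp
  have RP: "PD W" "diag_equiv (Tp, \<sigma>, Tm) W" using RE_props[OF re pg] i by auto
  obtain w0 where W: "W = (grafti Tp i Kp, w0, grafti Tm i Kp)" using w1 w2 by (cases W) auto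
  have pW: "nl (grafti Tp i Kp) = nl (grafti Tm i Kp)" "bnd (nl (grafti Tp i Kp)) w0" "pure (nl (grafti Tp i Kp)) w0"
    using RP(1) W by (auto simp: PD_simp)
  have eqn: "nl (grafti Tm i Km) = nl (grafti Tm i Kp)" using iT nK by simp
  have pD: "PD (grafti Tp i Kp, w0, grafti Tm i Km)" unfolding PD_simp eqn using pW by blast
  have nored: False if r: "redat (grafti Tp i Kp, w0, grafti Tm i Km) Y c" and pY: "PD Y" for Y c
  proof -
    obtain Sy wy Ty where Y: "Y = (Sy, wy, Ty)" by (cases Y)
    have rr: "c < nl Sy" "grafti Tp i Kp = ex Sy c" "grafti Tm i Km = ex Ty c"
      "beq (nl (grafti Tp i Kp)) w0 (cable c wy)"
      using r[unfolded Y redat_simp] by auto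
    have pY': "nl Sy = nl Ty" "bnd (nl Sy) wy" "pure (nl Sy) wy" using pY Y by (auto simp: PD_simp)
    show False
    proof (cases "nl Kp = 1")
      case True
      then have KL: "Kp = Leaf" "Km = Leaf" using nl_one nK by auto
      then have "W = (Tp, \<sigma>, Tm)" using RE_zero re True by simp
      then have "redat (Tp, \<sigma>, Tm) Y c" using r W KL by simp
      then show False using irr_redE[OF g _ pY] by blast
    next
      case False
      then have K2: "2 \<le> nl Km" "2 \<le> nl Kp" using nl_ge1[of Kp] nK by auto
      have cT: "c < nl Ty" using rr pY' by simp
      have cls: "(i \<le> c \<and> c + 1 < i + nl Km \<and> (\<exists>K1. Km = ex K1 (c - i) \<and> Ty = grafti Tm i K1 \<and> c - i < nl K1)) \<or>
        (c + 1 < i \<and> (\<exists>t1. Tm = ex t1 c \<and> c < nl t1 \<and> Ty = grafti t1 (i - 1) Km)) \<or>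
        (i + nl Km \<le> c \<and> (\<exists>t1. Tm = ex t1 (c + 1 - nl Km) \<and> c + 1 - nl Km < nl t1 \<and> Ty = grafti t1 i Km))"
        using grafti_class[OF K2(1) iT cT rr(3)] .
      have clsS: "(i \<le> c \<and> c + 1 < i + nl Kp \<and> (\<exists>K1. Kp = ex K1 (c - i) \<and> Sy = grafti Tp i K1 \<and> c - i < nl K1)) \<or>
        (c + 1 < i \<and> (\<exists>t1. Tp = ex t1 c \<and> c < nl t1 \<and> Sy = grafti t1 (i - 1) Kp)) \<or>
        (i + nl Kp \<le> c \<and> (\<exists>t1. Tp = ex t1 (c + 1 - nl Kp) \<and> c + 1 - nl Kp < nl t1 \<and> Sy = grafti t1 i Kp))"
        using grafti_class[OF K2(2) i rr(1) rr(2)] .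
      from cls show False
      proof (elim disjE conjE exE)
        fix K1' assume a: "i \<le> c" "c + 1 < i + nl Km" "Km = ex K1' (c - i)" "Ty = grafti Tm i K1'" "c - i < nl K1'"
        obtain K1 where b: "Kp = ex K1 (c - i)" "c - i < nl K1" using clsS a nK by auto
        have "nl K1 = nl K1'" using a b nK by simp
        then have pk: "PD (K1, [], K1')" by (simp add: PD_simp pure_def)
        have "redat (Kp, [], Km) (K1, [], K1') (c - i)" using a b by (simp add: redat_simp)
        then show False using irr_redE[OF k _ pk] by blast
      next
        fix t1 assume a: "c + 1 < i" "Tm = ex t1 c" "c < nl t1" "Ty = grafti t1 (i - 1) Km"
        have i1: "i - 1 < nl t1" using iT a by simp
        have gt: "grafti Tm i Kp = ex (grafti t1 (i - 1) Kp) c"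
          using grafti_ex_left[of c "i - 1" t1 Kp] a i1 by simp
        have pY2: "PD (Sy, wy, grafti t1 (i - 1) Kp)"
          using pY' a i1 nK by (simp add: PD_simp)
        have "redat W (Sy, wy, grafti t1 (i - 1) Kp) c" using rr W gt by (simp add: redat_simp)
        moreover have "c + 1 < i \<or> i + (nl Kp - 1) < c" using a by simp
        ultimately obtain Y'' where "redat (Tp, \<sigma>, Tm) Y'' (if c < i then c else c - (nl Kp - 1))" "PD Y''"
          using RE_outside[OF re pg i' _ pY2] by blast
        then show False using irr_redE[OF g] by blast
      next
        fix t1 assume a: "i + nl Km \<le> c" "Tm = ex t1 (c + 1 - nl Km)" "c + 1 - nl Km < nl t1" "Ty = grafti t1 i Km"
        have i1: "i < c + 1 - nl Km" using a K2 by linarith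
        have cc: "c + 1 - nl Km + nl Kp - 1 = c" using a K2 nK by linarith
        have gt: "grafti Tm i Kp = ex (grafti t1 i Kp) c"
          using grafti_ex_right[OF i1 a(3), of Kp] a cc by simp
        have it1: "i < nl t1" using i1 a by linarith
        have pY2: "PD (Sy, wy, grafti t1 i Kp)"
          using pY' a it1 nK by (simp add: PD_simp)
        have "redat W (Sy, wy, grafti t1 i Kp) c" using rr W gt by (simp add: redat_simp)
        moreover have "i + (nl Kp - 1) < c" using a nK K2 by linarith
        ultimately obtain Y'' where "redat (Tp, \<sigma>, Tm) Y'' (if c < i then c else c - (nl Kp - 1))" "PD Y''"
          using RE_outside[OF re pg i' _ pY2] by blast
        then show False using irr_redE[OF g] by blast
      qed
    qed
  qed
  show ?thesis using pD nored W by (auto simp: irr_def red_def)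
qed

theorem lemma4p17:
  fixes Tp Tm Hp Hm T :: tree and \<sigma> :: bword and i :: nat and u v :: "bool list"
  assumes "in_BF (Tp, \<sigma>, Tm)"
    and "reduced (Tp, \<sigma>, Tm)"
    and "i < num_leaves Tp" and "u = leaves Tp ! i" and "v = leaves Tm ! bpos \<sigma> i"
    and "in_F (Hp, [], Hm)"
    and "v \<in> set (leaves T)"
  shows "NN (mult (elt (Tp, \<sigma>, Tm)) (elt (sub_at T v Hp Hm)))
           = NN (elt (Tp, \<sigma>, Tm)) + NN (elt (Hp, [], Hm)) - 1"
proof -
  note A = assms
  define g where "g = (Tp, \<sigma>, Tm)"
  have wfg: "wf_diag g" and pu: "\<forall>j<nl Tp. bpos \<sigma> j = j" using A(1) by (auto simp: in_BF_def g_def)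
  have wf2: "nl Tp = nl Tm \<and> bnd (nl Tp) \<sigma>" using wfg unfolding g_def wf_diag_simp .
  have pg: "PD g" unfolding g_def PD_simp pure_def using wf2 pu by blast
  have nT: "nl Tp = nl Tm" using pg by (simp add: g_def PD_simp)
  have bi: "bpos \<sigma> i = i" using pu A(3) by simp
  have vi: "v = leaves Tm ! i" using A(5) bi by simp
  have NNg: "NN (elt g) = nl Tp" using A(2) by (simp add: reduced_def dleaves_def g_def)
  have ig: "irr g"
  proof -
    have False if r: "red g Y" for Y
    proof -
      have "diag_equiv g Y" by (rule dequiv_sym[OF red_dequiv[OF r]])
      then have "Y \<in> elt g" by (simp add: elt_def)
      then have "NN (elt g) \<le> dleaves Y" by (rule NN_le)
      moreover have "dleaves Y = nl Tp - 1" using red_nl[OF r] by (simp add: dleaves_def g_def)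
      ultimately show False using NNg nl_pos[of Tp] by linarith
    qed
    then show ?thesis using pg by (auto simp: irr_def)
  qed
  define h where "h = (Hp, [] :: bword, Hm)"
  have wfh: "wf_diag h" using A(6) by (simp add: in_F_def h_def)
  have nH: "nl Hp = nl Hm" using wfh by (simp add: h_def wf_diag_simp)
  have ph: "PD h" using nH by (simp add: h_def PD_simp pure_def)
  obtain Kn where kn: "nf h Kn" using nf_exists ph by blast
  obtain Kp k Km where Kn: "Kn = (Kp, k, Km)" by (cases Kn)
  obtain jT where jT: "jT < nl T" "leaves T ! jT = v" using A(7) by (auto simp: in_set_conv_nth num_leaves_def)
  have L3r: "diag_equiv (grafti T jT Hp, [], grafti T jT Hm) (grafti T jT Kp, [], grafti T jT Km) \<and> beq (nl Kp) k []"
    using L3[where P=Hp and w="[]" and Q=Hm and Y=Kn and T=T and j=jT] kn Kn jT ph by (simp add: nf_def h_def)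
  have pKn: "PD Kn" using kn by (simp add: nf_def irr_def)
  have nK: "nl Kp = nl Km" using pKn Kn by (simp add: PD_simp)
  define Kh where "Kh = (Kp, [] :: bword, Km)"
  have pKh: "PD Kh" using nK by (simp add: Kh_def PD_simp pure_def)
  have sK: "sim Kn Kh" using pKn pKh L3r Kn by (simp add: Kh_def sim_simp)
  have iKh: "irr Kh" using irr_sim[OF _ sK] kn by (simp add: nf_def)
  have hKn: "diag_equiv h Kn" using reds_dequiv[of h Kn] kn by (simp add: nf_def)
  have hK: "diag_equiv h Kh" using dequiv_trans[OF hKn sim_dequiv[OF sK]] .
  have NNh: "NN (elt h) = nl Kp" using elt_eq[OF hK] NN_irr[OF iKh] by (simp add: Kh_def)
  define h' where "h' = sub_at T v Hp Hm"
  have h'e: "h' = (grafti T jT Hp, [], grafti T jT Hm)"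
    using jT by (simp add: h'_def sub_at_def graft_grafti[symmetric])
  define U where "U = un Tm T"
  have iTm: "i < nl Tm" using A(3) nT by simp
  obtain jU where jU: "jU < nl U" "leaves U ! jU = leaves Tm ! i"
    using un_leaf[OF iTm jT(1)] jT vi by (auto simp: U_def)
  have sTU: "subt T U" "subt Tm U" unfolding U_def by (rule sub_un2, rule sub_un1)
  have E2: "diag_equiv (grafti T jT Kp, [], grafti T jT Km) (grafti U jU Kp, [], grafti U jU Km)"
    using LIFTF[OF sTU(1) jT(1) jU(1) _ nK] jU jT vi by simp
  define YD where "YD = (grafti U jU Kp, [] :: bword, grafti U jU Km)"
  have "diag_equiv h' (grafti T jT Kp, [], grafti T jT Km)" using conjunct1[OF L3r] h'e by simp
  then have hY: "diag_equiv h' YD" unfolding YD_def using E2 by (rule dequiv_trans)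
  obtain W where W: "RE g i (nl Kp - 1) W" "fst W = grafti Tp i Kp" "snd (snd W) = grafti Tm i Kp"
    using RE_exists[of Tp \<sigma> Tm i Kp] pg A(3) by (auto simp: g_def)
  have RP: "PD W" "diag_equiv g W" using RE_props[OF W(1) pg] A(3) by (auto simp: g_def)
  define w0 where "w0 = fst (snd W)"
  have We: "W = (grafti Tp i Kp, w0, grafti Tm i Kp)" using W by (cases W) (simp add: w0_def)
  obtain A' w' where LF: "diag_equiv (grafti Tp i Kp, w0, grafti Tm i Kp) (A', w', grafti U jU Kp)"
     "diag_equiv (grafti Tp i Kp, w0, grafti Tm i Km) (A', w', grafti U jU Km)"
    using LIFT[OF sTU(2) iTm jU(1) jU(2)[symmetric] nK, of "grafti Tp i Kp" w0] RP We by auto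
  define XD where "XD = (A', w', grafti U jU Kp)"
  have "diag_equiv W XD" using LF(1) We by (simp add: XD_def)
  then have gX: "diag_equiv g XD" by (rule dequiv_trans[OF RP(2)])
  define D0 where "D0 = (grafti Tp i Kp, w0, grafti Tm i Km)"
  have pXY: "dprod XD YD = (A', w', grafti U jU Km)" by (simp add: XD_def YD_def)
  have D0P: "diag_equiv D0 (dprod XD YD)" using LF(2) pXY by (simp add: D0_def)
  have "irr (grafti Tp i Kp, fst (snd W), grafti Tm i Km)"
    using D0_irr[of Tp \<sigma> Tm Kp Km i W] ig iKh nK W A(3) by (simp add: g_def Kh_def)
  then have iD0: "irr D0" unfolding D0_def w0_def .
  have ph': "PD h'" using h'e jT nH by (simp add: PD_simp pure_def)
  obtain Zh where zh: "nf h' Zh" using nf_exists ph' by blast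
  have iZh: "irr Zh" using zh by (simp add: nf_def)
  have "diag_equiv h' Zh" using reds_dequiv[of h' Zh] zh by (simp add: nf_def)
  then have h'Z: "diag_equiv Zh h'" by (rule dequiv_sym)
  have ZY: "diag_equiv Zh YD" using dequiv_trans[OF h'Z hY] .
  have mult_eq: "mult (elt g) (elt h') = elt D0"
  proof
    show "mult (elt g) (elt h') \<subseteq> elt D0"
    proof
      fix D assume "D \<in> mult (elt g) (elt h')"
      then obtain Tp' w M w'' Sm where m: "(Tp', w, M) \<in> elt g" "(M, w'', Sm) \<in> elt h'"
        "diag_equiv (Tp', w @ w'', Sm) D" by (auto simp: mult_def)
      have gX': "diag_equiv g (Tp', w, M)" using m(1) by (simp add: elt_def)
      have "diag_equiv h' (M, w'', Sm)" using m(2) by (simp add: elt_def)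
      then have ZY': "diag_equiv Zh (M, w'', Sm)" by (rule dequiv_trans[OF h'Z])
      have "diag_equiv (dprod (Tp', w, M) (M, w'', Sm)) (dprod XD YD)"
        using PW[OF gX' gX ig ZY' ZY iZh] by (simp add: XD_def YD_def)
      then have e: "diag_equiv (Tp', w @ w'', Sm) (dprod XD YD)" by simp
      have e2: "diag_equiv (Tp', w @ w'', Sm) D0" using dequiv_trans[OF e dequiv_sym[OF D0P]] .
      have "diag_equiv D0 D" by (rule dequiv_trans[OF dequiv_sym[OF e2] m(3)])
      then show "D \<in> elt D0" by (simp add: elt_def)
    qed
  next
    show "elt D0 \<subseteq> mult (elt g) (elt h')"
    proof
      fix D assume "D \<in> elt D0"
      then have d: "diag_equiv D0 D" by (simp add: elt_def)
      have "diag_equiv (dprod XD YD) D" by (rule dequiv_trans[OF dequiv_sym[OF D0P] d])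
      then have "diag_equiv (A', w', grafti U jU Km) D" using pXY by simp
      then have "diag_equiv (A', w' @ [], grafti U jU Km) D" by simp
      moreover have "(A', w', grafti U jU Kp) \<in> elt g" using gX by (simp add: elt_def XD_def)
      moreover have "(grafti U jU Kp, [], grafti U jU Km) \<in> elt h'" using hY by (simp add: elt_def YD_def)
      ultimately show "D \<in> mult (elt g) (elt h')" unfolding mult_def by blast
    qed
  qed
  have "NN (elt D0) = nl (grafti Tp i Kp)" using NN_irr[OF iD0] by (simp add: D0_def)
  also have "\<dots> = nl Tp + nl Kp - 1" using A(3) by simp
  finally have "NN (mult (elt g) (elt h')) = nl Tp + nl Kp - 1" using mult_eq by simp
  then show ?thesis using NNg NNh by (simp add: g_def h_def h'_def)
qed

end
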